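(* Let $\mathbf{y}=\mathbf{y}_1\sqcup\cdots\sqcup\mathbf{y}_d$ with $\mathbf{y}_i=\{y_{i1},\dots,y_{in}\}$, and let $f(\mathbf{y})$ be computed by a UPT set-multilinear circuit of preimage-width $w\ge1$ whose parse-tree shape $T$ has depth at most $r$ and in which every $\times$ node has exactly two ordered children. Suppose $\operatorname{char}\mathbb{F}=0$ or $\operatorname{char}\mathbb{F}>d\,n\,w^{r}$. For $i\in[d]$ let $a_1a_2\cdots a_q\in\{L,R\}^q$ ($q\le r$) be the signature of $\mathbf{y}_i$, and define $\Psi(y_{ij})=\Phi_{a_1}(\Phi_{a_2}(\cdots\Phi_{a_q}(t^j)\cdots))\in\mathbb{F}[t]$. Then $f\ne0$ if and only if $f(\Psi(\mathbf{y}))\ne0$.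
   Context: A circuit computing $f\in\mathbb{F}[\mathbf{y}]$ is set-multilinear w.r.t. the partition if each gate $g$ is labelled by $S_g\subseteq[d]$ and computes a polynomial in $\bigcup_{i\in S_g}\mathbf{y}_i$ whose monomials each contain exactly one variable of $\mathbf{y}_i$ for each $i\in S_g$; $+$ gates share the label of their children; a $\times$ gate with children $g_1,g_2$ has $S_g=S_{g_1}\sqcup S_{g_2}$. Parse tree: from the root keep all children of $\times$ gates and one child of each $+$ gate; its shape is the ordered rooted tree with node labels. UPT set-multilinear: all parse trees have the same identically-labelled shape $T$; preimage-width is the maximum over nodes $\tau\in T$ of the number of gates occupying $\tau$ in some parse tree. Each $i\in[d]$ labels exactly one leaf $\tau_i$ of $T$ (the leaf where variables of $\mathbf{y}_i$ are read). The signature of $\mathbf{y}_i$ is the sequence obtained by walking from the root of $T$ to $\tau_i$ and recording $L$ (resp. $R$) each time the walk goes to the left (resp. right) child of a $\times$ node. $\Phi_L,\Phi_R$ are the $\mathbb{F}$-algebra endomorphisms of $\mathbb{F}[t]$ with $\Phi_L(t)=t^w$ and $\Phi_R(t)=t^w+t^{w-1}$. *)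

theory Defs
  imports "HOL-Library.Poly_Mapping" "HOL-Computational_Algebra.Polynomial"
begin

text \<open>Variable y_ij is encoded as the pair (i,j), with 1 \<le> i \<le> d and 1 \<le> j \<le> n.\<close>

type_synonym 'a mpoly = "((nat \<times> nat) \<Rightarrow>\<^sub>0 nat) \<Rightarrow>\<^sub>0 'a"

definition mvar :: "nat \<times> nat \<Rightarrow> 'a::comm_ring_1 mpoly" where
  "mvar v = Poly_Mapping.single (Poly_Mapping.single v 1) 1"

definition mconst :: "'a::comm_ring_1 \<Rightarrow> 'a mpoly" where
  "mconst c = Poly_Mapping.single 0 c"

definition msubst :: "(nat \<times> nat \<Rightarrow> 'a::comm_ring_1 poly) \<Rightarrow> 'a mpoly \<Rightarrow> 'a poly" where
  "msubst \<Psi> p = (\<Sum>m\<in>Poly_Mapping.keys p. smult (Poly_Mapping.lookup p m) (\<Prod>v\<in>Poly_Mapping.keys m. \<Psi> v ^ Poly_Mapping.lookup m v))"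

text \<open>A circuit is a map from gate indices to gates; gates are numbered topologically
  (children have smaller index), which encodes acyclicity.\<close>

datatype 'a gate = Inp nat nat | Add "('a \<times> nat) list" | Mul nat nat

definition circuit_wf :: "(nat \<Rightarrow> 'a gate) \<Rightarrow> nat \<Rightarrow> bool" where
  "circuit_wf C N \<longleftrightarrow> (\<forall>g<N. case C g of
       Inp i j \<Rightarrow> True
     | Add cs \<Rightarrow> (\<forall>(c,k)\<in>set cs. k < g)
     | Mul a b \<Rightarrow> a < g \<and> b < g)"

definition getv :: "'b::zero list \<Rightarrow> nat \<Rightarrow> 'b" where
  "getv vs k = (if k < length vs then vs ! k else 0)"

definition gate_val :: "(nat \<Rightarrow> 'a::comm_ring_1 gate) \<Rightarrow> 'a mpoly list \<Rightarrow> nat \<Rightarrow> 'a mpoly" where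
  "gate_val C vs g = (case C g of
       Inp i j \<Rightarrow> mvar (i,j)
     | Add cs \<Rightarrow> (\<Sum>(c,k)\<leftarrow>cs. mconst c * getv vs k)
     | Mul a b \<Rightarrow> getv vs a * getv vs b)"

primrec vals :: "(nat \<Rightarrow> 'a::comm_ring_1 gate) \<Rightarrow> nat \<Rightarrow> 'a mpoly list" where
  "vals C 0 = []"
| "vals C (Suc g) = vals C g @ [gate_val C (vals C g) g]"

definition circ_val :: "(nat \<Rightarrow> 'a::comm_ring_1 gate) \<Rightarrow> nat \<Rightarrow> 'a mpoly" where
  "circ_val C g = vals C (Suc g) ! g"

text \<open>Set-multilinearity w.r.t. the partition y_1,...,y_d (each of size n), given
  by a labelling S of the gates; the root gate rt is labelled [d].\<close>
definition set_multilinear ::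
  "(nat \<Rightarrow> 'a gate) \<Rightarrow> nat \<Rightarrow> (nat \<Rightarrow> nat set) \<Rightarrow> nat \<Rightarrow> nat \<Rightarrow> nat \<Rightarrow> bool" where
  "set_multilinear C N S d n rt \<longleftrightarrow> S rt = {1..d} \<and>
     (\<forall>g<N. S g \<subseteq> {1..d} \<and> (case C g of
         Inp i j \<Rightarrow> 1 \<le> i \<and> i \<le> d \<and> 1 \<le> j \<and> j \<le> n \<and> S g = {i}
       | Add cs \<Rightarrow> (\<forall>(c,k)\<in>set cs. S k = S g)
       | Mul a b \<Rightarrow> S a \<inter> S b = {} \<and> S g = S a \<union> S b))"

datatype ptree = PT nat "ptree list"

inductive is_ptree :: "(nat \<Rightarrow> 'a gate) \<Rightarrow> nat \<Rightarrow> ptree \<Rightarrow> bool" for C where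
  inp: "C g = Inp i j \<Longrightarrow> is_ptree C g (PT g [])"
| add: "C g = Add cs \<Longrightarrow> (c, k) \<in> set cs \<Longrightarrow> is_ptree C k t \<Longrightarrow> is_ptree C g (PT g [t])"
| mul: "C g = Mul a b \<Longrightarrow> is_ptree C a ta \<Longrightarrow> is_ptree C b tb \<Longrightarrow> is_ptree C g (PT g [ta, tb])"

datatype stree = SNode "nat set" "stree list"

fun shape :: "(nat \<Rightarrow> nat set) \<Rightarrow> ptree \<Rightarrow> stree" where
  "shape S (PT g ts) = SNode (S g) (map (shape S) ts)"

text \<open>Positions (nodes) of a shape, as paths of child indices from the root.\<close>
inductive pos :: "stree \<Rightarrow> nat list \<Rightarrow> bool" where
  here: "pos t []"
| child: "k < length ts \<Longrightarrow> pos (ts ! k) p \<Longrightarrow> pos (SNode l ts) (k # p)"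

fun subtree :: "stree \<Rightarrow> nat list \<Rightarrow> stree" where
  "subtree t [] = t"
| "subtree (SNode l ts) (k # p) = subtree (ts ! k) p"

fun pgate :: "ptree \<Rightarrow> nat list \<Rightarrow> nat" where
  "pgate (PT g ts) [] = g"
| "pgate (PT g ts) (k # p) = pgate (ts ! k) p"

definition preimage :: "(nat \<Rightarrow> 'a gate) \<Rightarrow> nat \<Rightarrow> nat list \<Rightarrow> nat set" where
  "preimage C rt p = {pgate t p | t. is_ptree C rt t}"

definition preimage_width :: "(nat \<Rightarrow> 'a gate) \<Rightarrow> nat \<Rightarrow> stree \<Rightarrow> nat" where
  "preimage_width C rt T = Max {card (preimage C rt p) | p. pos T p}"

definition depth_le :: "stree \<Rightarrow> nat \<Rightarrow> bool" where
  "depth_le T r \<longleftrightarrow> (\<forall>p. pos T p \<longrightarrow> length p \<le> r)"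

datatype dir = L | R

text \<open>Record L/R whenever the walk passes to the left/right child of a \<times> node
  (the nodes with two children; + nodes have exactly one child in a shape).\<close>
fun signature :: "stree \<Rightarrow> nat list \<Rightarrow> dir list" where
  "signature t [] = []"
| "signature (SNode l ts) (k # p) =
     (if length ts = 2 then (if k = 0 then L else R) # signature (ts ! k) p
      else signature (ts ! k) p)"

definition leaf_pos :: "stree \<Rightarrow> nat \<Rightarrow> nat list" where
  "leaf_pos T i = (THE p. pos T p \<and> subtree T p = SNode {i} [])"

definition Phi :: "nat \<Rightarrow> dir \<Rightarrow> 'a::comm_ring_1 poly \<Rightarrow> 'a poly" where
  "Phi w a q = (case a of
       L \<Rightarrow> pcompose q (monom 1 w)
     | R \<Rightarrow> pcompose q (monom 1 w + monom 1 (w - 1)))"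

definition Psi :: "nat \<Rightarrow> stree \<Rightarrow> nat \<times> nat \<Rightarrow> 'a::comm_ring_1 poly" where
  "Psi w T v = foldr (Phi w) (signature T (leaf_pos T (fst v))) (monom 1 (snd v))"

end

theory Submission
  imports Defs
begin


definition meval :: "(nat \<times> nat \<Rightarrow> 'a::comm_ring_1 poly) \<Rightarrow> ((nat \<times> nat) \<Rightarrow>\<^sub>0 nat) \<Rightarrow> 'a poly" where
  "meval \<Psi> m = (\<Prod>v\<in>Poly_Mapping.keys m. \<Psi> v ^ Poly_Mapping.lookup m v)"

lemma meval_superset:
  assumes "finite K" "Poly_Mapping.keys m \<subseteq> K"
  shows "meval \<Psi> m = (\<Prod>v\<in>K. \<Psi> v ^ Poly_Mapping.lookup m v)"
  unfolding meval_def
  by (rule prod.mono_neutral_left[OF assms]) (auto simp: in_keys_iff)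

lemma meval_add: "meval \<Psi> (m1 + m2) = meval \<Psi> m1 * meval \<Psi> m2"
proof -
  let ?K = "Poly_Mapping.keys m1 \<union> Poly_Mapping.keys m2"
  have "meval \<Psi> (m1 + m2) = (\<Prod>v\<in>?K. \<Psi> v ^ Poly_Mapping.lookup (m1+m2) v)"
    using keys_add[of m1 m2] by (intro meval_superset) auto
  also have "\<dots> = (\<Prod>v\<in>?K. \<Psi> v ^ Poly_Mapping.lookup m1 v) * (\<Prod>v\<in>?K. \<Psi> v ^ Poly_Mapping.lookup m2 v)"
    by (simp add: lookup_add power_add prod.distrib)
  also have "\<dots> = meval \<Psi> m1 * meval \<Psi> m2"
    by (subst (1 2) meval_superset[of ?K]) auto
  finally show ?thesis .
qed

lemma meval_zero [simp]: "meval \<Psi> 0 = 1"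
  by (simp add: meval_def)

lemma meval_single: "meval \<Psi> (Poly_Mapping.single v 1) = \<Psi> v"
  by (simp add: meval_def)

lemma msubst_superset:
  assumes "finite K" "Poly_Mapping.keys p \<subseteq> K"
  shows "msubst \<Psi> p = (\<Sum>m\<in>K. smult (Poly_Mapping.lookup p m) (meval \<Psi> m))"
  unfolding msubst_def meval_def[symmetric]
  by (rule sum.mono_neutral_left[OF assms]) (auto simp: in_keys_iff)

lemma msubst_add: "msubst \<Psi> (p + q) = msubst \<Psi> p + msubst \<Psi> q"
proof -
  let ?K = "Poly_Mapping.keys p \<union> Poly_Mapping.keys q"
  have "msubst \<Psi> (p + q) = (\<Sum>m\<in>?K. smult (Poly_Mapping.lookup (p+q) m) (meval \<Psi> m))"
    using keys_add[of p q] by (intro msubst_superset) auto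
  also have "\<dots> = (\<Sum>m\<in>?K. smult (Poly_Mapping.lookup p m) (meval \<Psi> m)) + (\<Sum>m\<in>?K. smult (Poly_Mapping.lookup q m) (meval \<Psi> m))"
    by (simp add: lookup_add smult_add_left sum.distrib)
  also have "\<dots> = msubst \<Psi> p + msubst \<Psi> q"
    by (subst (1 2) msubst_superset[of ?K]) auto
  finally show ?thesis .
qed

lemma msubst_zero [simp]: "msubst \<Psi> 0 = 0"
  by (simp add: msubst_def)

lemma msubst_sum: "msubst \<Psi> (\<Sum>i\<in>I. f i) = (\<Sum>i\<in>I. msubst \<Psi> (f i))"
  by (induction I rule: infinite_finite_induct) (auto simp: msubst_add)

lemma msubst_sum_list: "msubst \<Psi> (sum_list xs) = sum_list (map (msubst \<Psi>) xs)"
  by (induction xs) (auto simp: msubst_add)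

lemma msubst_single: "msubst \<Psi> (Poly_Mapping.single m c) = smult c (meval \<Psi> m)"
  by (subst msubst_superset[of "{m}"]) (auto simp: lookup_single)

lemma mpoly_expand: "p = (\<Sum>m\<in>Poly_Mapping.keys p. Poly_Mapping.single m (Poly_Mapping.lookup p m))"
  by (rule poly_mapping_eqI) (auto simp: lookup_sum lookup_single when_def in_keys_iff
      intro: sum.neutral sum.delta' [THEN trans])

lemma msubst_mult: "msubst \<Psi> (p * q) = msubst \<Psi> p * msubst \<Psi> q"
proof -
  let ?P = "Poly_Mapping.keys p" and ?Q = "Poly_Mapping.keys q"
  have "p * q = (\<Sum>m\<in>?P. Poly_Mapping.single m (Poly_Mapping.lookup p m)) * (\<Sum>m\<in>?Q. Poly_Mapping.single m (Poly_Mapping.lookup q m))"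
    using mpoly_expand[of p] mpoly_expand[of q] by simp
  also have "\<dots> = (\<Sum>m\<in>?P. \<Sum>m'\<in>?Q. Poly_Mapping.single (m+m') (Poly_Mapping.lookup p m * Poly_Mapping.lookup q m'))"
    by (simp add: sum_product mult_single)
  finally have "msubst \<Psi> (p*q) = (\<Sum>m\<in>?P. \<Sum>m'\<in>?Q. smult (Poly_Mapping.lookup p m * Poly_Mapping.lookup q m') (meval \<Psi> m * meval \<Psi> m'))"
    by (simp add: msubst_sum msubst_single meval_add)
  also have "\<dots> = (\<Sum>m\<in>?P. smult (Poly_Mapping.lookup p m) (meval \<Psi> m)) * (\<Sum>m\<in>?Q. smult (Poly_Mapping.lookup q m) (meval \<Psi> m))"
    by (simp add: sum_product mult_ac)
  finally show ?thesis by (simp add: msubst_def meval_def)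
qed

lemma msubst_mconst [simp]: "msubst \<Psi> (mconst c) = [:c:]"
  by (simp add: mconst_def msubst_single)

lemma msubst_mvar [simp]: "msubst \<Psi> (mvar v) = \<Psi> v"
  by (simp add: mvar_def msubst_single meval_def)

lemma msubst_cong:
  assumes "\<And>m v. m \<in> Poly_Mapping.keys p \<Longrightarrow> v \<in> Poly_Mapping.keys m \<Longrightarrow> \<Psi> v = \<Psi>' v"
  shows "msubst \<Psi> p = msubst \<Psi>' p"
  unfolding msubst_def using assms by (intro sum.cong prod.cong refl) auto

lemma msubst_hom:
  assumes add: "\<And>a b. h (a + b) = h a + h b" and mult: "\<And>a b. h (a * b) = h a * h b"
    and sm: "\<And>c a. h (smult c a) = smult c (h a)" and one: "h 1 = 1"
  shows "msubst (\<lambda>v. h (\<Psi> v)) p = h (msubst \<Psi> p)"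
proof -
  have z: "h 0 = 0" using add[of 0 0] by simp
  have hs: "h (sum f A) = sum (\<lambda>x. h (f x)) A" for f and A :: "'c set"
    by (induction A rule: infinite_finite_induct) (auto simp: z add)
  have hp: "h (prod f A) = prod (\<lambda>x. h (f x)) A" for f and A :: "'c set"
    by (induction A rule: infinite_finite_induct) (auto simp: one mult)
  have hpow: "h (x ^ k) = h x ^ k" for x k
    by (induction k) (auto simp: one mult)
  show ?thesis unfolding msubst_def by (simp add: hs hp hpow sm)
qed


lemma of_nat_nz_char:
  assumes "CHAR('a::comm_ring_1) = 0 \<or> k < CHAR('a)" "k > 0"
  shows "(of_nat k :: 'a) \<noteq> 0"
  using assms by (auto simp: of_nat_eq_0_iff_char_dvd dest: dvd_imp_le)

lemma few_terms_zero:
  fixes f :: "'a::field poly"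
  assumes "card {i. coeff f i \<noteq> 0} \<le> w" "[:-1,1:]^w dvd f"
    "CHAR('a) = 0 \<or> degree f < CHAR('a)"
  shows "f = 0"
  using assms
proof (induction "degree f" arbitrary: f w rule: less_induct)
  case less
  show ?case
  proof (rule ccontr)
    assume fnz: "f \<noteq> 0"
    have fin: "finite {i. coeff f i \<noteq> 0}"
      by (rule finite_subset[of _ "{..degree f}"]) (auto intro: le_degree)
    show False
    proof (cases "coeff f 0 = 0")
      case True
      obtain g where fg: "f = pCons 0 g" using True by (metis pCons_cases coeff_pCons_0)
      have gnz: "g \<noteq> 0" using fnz fg by auto
      have dg: "degree g < degree f" using fg gnz by simp
      have "f = [:0,1:] * g" using fg by simp
      have "order 1 f = order 1 [:0,1::'a:] + order 1 g"
        using fnz unfolding \<open>f = [:0,1:] * g\<close> by (rule order_mult)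
      moreover have "order 1 [:0,(1::'a):] = 0"
        using order_root[of "[:0,(1::'a):]" 1] by auto
      ultimately have "order 1 f = order 1 g" by simp
      hence dvdg: "[:-1,1:]^w dvd g" using less.prems(2) fnz gnz by (simp add: order_divides)
      have "{i. coeff f i \<noteq> 0} = Suc ` {i. coeff g i \<noteq> 0}"
      proof (intro set_eqI iffI)
        fix i assume "i \<in> {i. coeff f i \<noteq> 0}"
        then obtain k where "i = Suc k" using True by (cases i) auto
        thus "i \<in> Suc ` {i. coeff g i \<noteq> 0}" using \<open>i \<in> _\<close> fg by auto
      qed (use fg in auto)
      hence "card {i. coeff g i \<noteq> 0} \<le> w"
        using less.prems(1) by (simp add: card_image)
      from less.hyps[OF dg this dvdg] less.prems(3) dg gnz show False by auto
    next
      case False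
      have "0 \<in> {i. coeff f i \<noteq> 0}" using False by simp
      hence "card {i. coeff f i \<noteq> 0} > 0" using fin card_gt_0_iff by blast
      then obtain w' where w: "w = Suc w'" using less.prems(1) by (cases w) auto
      obtain h where fh: "f = [:-1,1:]^w * h" using less.prems(2) by blast
      have pd1: "pderiv [:-1,1::'a:] = 1" by (simp add: pderiv_pCons)
      have "pderiv f = [:-1,1:]^Suc w' * pderiv h + h * (smult (of_nat (Suc w')) ([:-1,1:]^w') * pderiv [:-1,1:])"
        unfolding fh w pderiv_mult pderiv_power_Suc by simp
      also have "\<dots> = [:-1,1:]^w' * ([:-1,1:] * pderiv h + smult (of_nat (Suc w')) h)"
        unfolding pd1 by (simp add: algebra_simps)
      finally have "pderiv f = [:-1,1:]^w' * ([:-1,1:] * pderiv h + smult (of_nat (Suc w')) h)" .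
      hence dvd': "[:-1,1:]^w' dvd pderiv f" by simp
      have dpos: "degree f > 0"
      proof (rule ccontr)
        assume "\<not> degree f > 0"
        hence "degree f = 0" by simp
        moreover have "degree ([:-1,1:]^w :: 'a poly) = w" by (simp add: degree_power_eq)
        ultimately show False using dvd_imp_degree_le[OF less.prems(2) fnz] w by simp
      qed
      have nz: "(of_nat (Suc i) :: 'a) \<noteq> 0" if "coeff f (Suc i) \<noteq> 0" for i
      proof -
        have "Suc i \<le> degree f" using that le_degree by blast
        thus ?thesis using less.prems(3) by (intro of_nat_nz_char) auto
      qed
      have tset: "{i. coeff (pderiv f) i \<noteq> 0} = {i. coeff f (Suc i) \<noteq> 0}"
        using nz by (auto simp: coeff_pderiv)
      have "{i. coeff f i \<noteq> 0} = insert 0 (Suc ` {i. coeff f (Suc i) \<noteq> 0})"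
      proof (intro set_eqI iffI)
        fix i assume "i \<in> {i. coeff f i \<noteq> 0}"
        thus "i \<in> insert 0 (Suc ` {i. coeff f (Suc i) \<noteq> 0})" by (cases i) auto
      qed (use False in auto)
      moreover have "finite {i. coeff f (Suc i) \<noteq> 0}"
        by (rule finite_subset[of _ "{..degree f}"]) (auto dest: le_degree)
      ultimately have "card {i. coeff f i \<noteq> 0} = Suc (card {i. coeff f (Suc i) \<noteq> 0})"
        by (simp add: card_image)
      hence c': "card {i. coeff (pderiv f) i \<noteq> 0} \<le> w'" using tset less.prems(1) w by simp
      have dd: "degree (pderiv f) < degree f"
      proof -
        have "degree (pderiv f) \<le> degree f - 1"
          by (rule degree_le) (auto simp: coeff_pderiv coeff_eq_0)
        thus ?thesis using dpos by simp
      qed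
      have "pderiv f = 0"
        using less.hyps[OF dd c' dvd'] less.prems(3) dd by auto
      hence "coeff f (degree f) = 0"
      proof -
        have "coeff (pderiv f) (degree f - 1) = 0" using \<open>pderiv f = 0\<close> by simp
        hence "of_nat (Suc (degree f - 1)) * coeff f (Suc (degree f - 1)) = 0" by (simp only: coeff_pderiv)
        moreover have "Suc (degree f - 1) = degree f" using dpos by simp
        ultimately show ?thesis using nz[of "degree f - 1"] by auto
      qed
      thus False using fnz by simp
    qed
  qed
qed


lemma map_poly_hom_add:
  fixes h :: "'a::comm_ring_1 \<Rightarrow> 'b::comm_ring_1"
  assumes "\<And>a b. h (a + b) = h a + h b"
  shows "map_poly h (p + q) = map_poly h p + map_poly h q"
proof -
  have z: "h 0 = 0" using assms[of 0 0] by simp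
  show ?thesis by (rule poly_eqI) (simp add: coeff_map_poly z assms)
qed

lemma map_poly_hom_mult:
  fixes h :: "'a::comm_ring_1 \<Rightarrow> 'b::comm_ring_1"
  assumes add: "\<And>a b. h (a + b) = h a + h b" and mult: "\<And>a b. h (a * b) = h a * h b"
  shows "map_poly h (p * q) = map_poly h p * map_poly h q"
proof -
  have z: "h 0 = 0" using add[of 0 0] by simp
  have sm: "map_poly h (smult a q) = smult (h a) (map_poly h q)" for a q
    by (rule poly_eqI) (simp add: coeff_map_poly z mult)
  show ?thesis
  proof (induction p)
    case 0 show ?case by simp
  next
    case (pCons a p)
    have "map_poly h (pCons a p * q) = map_poly h (smult a q + pCons 0 (p * q))" by simp
    also have "\<dots> = smult (h a) (map_poly h q) + pCons 0 (map_poly h p * map_poly h q)"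
      by (simp add: map_poly_hom_add[OF add] sm map_poly_pCons z pCons.IH)
    also have "\<dots> = map_poly h (pCons a p) * map_poly h q"
      by (simp add: map_poly_pCons z)
    finally show ?case .
  qed
qed

lemma map_poly_hom_pcompose:
  fixes h :: "'a::comm_ring_1 \<Rightarrow> 'b::comm_ring_1"
  assumes add: "\<And>a b. h (a + b) = h a + h b" and mult: "\<And>a b. h (a * b) = h a * h b"
  shows "map_poly h (pcompose p q) = pcompose (map_poly h p) (map_poly h q)"
proof -
  have z: "h 0 = 0" using add[of 0 0] by simp
  show ?thesis
    by (induction p)
      (simp_all add: pcompose_pCons map_poly_hom_add[OF add] map_poly_hom_mult[OF add mult]
        map_poly_pCons z)
qed

section \<open>Bivariate evaluation\<close>

definition ev2 :: "'a::comm_ring_1 poly \<Rightarrow> 'a poly \<Rightarrow> 'a poly poly \<Rightarrow> 'a poly" where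
  "ev2 u v P = poly (map_poly (\<lambda>q. pcompose q u) P) v"

lemma ev2_add: "ev2 u v (P + Q) = ev2 u v P + ev2 u v Q"
  unfolding ev2_def by (simp add: map_poly_hom_add pcompose_add)

lemma ev2_mult: "ev2 u v (P * Q) = ev2 u v P * ev2 u v Q"
  unfolding ev2_def by (simp add: map_poly_hom_mult pcompose_add pcompose_mult)

lemma ev2_zero [simp]: "ev2 u v 0 = 0"
  by (simp add: ev2_def)

lemma ev2_sum: "ev2 u v (sum f A) = (\<Sum>x\<in>A. ev2 u v (f x))"
  by (induction A rule: infinite_finite_induct) (auto simp: ev2_add)

lemma ev2_const: "ev2 u v [:q:] = pcompose q u"
  unfolding ev2_def by (simp add: map_poly_pCons)

lemma ev2_lift: "ev2 u v (map_poly (\<lambda>c. [:c:]) B) = pcompose B v"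
  unfolding ev2_def by (simp add: map_poly_map_poly o_def) (simp add: pcompose_altdef)

lemma coeff_pcompose_monom:
  fixes c :: "'a::comm_semiring_1 poly"
  assumes "w > 0"
  shows "coeff (pcompose c (monom 1 w)) k = (if w dvd k then coeff c (k div w) else 0)"
  using assms
proof (induction c arbitrary: k)
  case 0 thus ?case by simp
next
  case (pCons a c)
  have "coeff (pcompose (pCons a c) (monom 1 w)) k
        = coeff [:a:] k + (if k < w then 0 else coeff (pcompose c (monom 1 w)) (k - w))"
    unfolding pcompose_pCons coeff_add coeff_monom_mult by (simp only: mult.left_neutral)
  also have "\<dots> = (if w dvd k then coeff (pCons a c) (k div w) else 0)"
  proof (cases "k < w")
    case True thus ?thesis using pCons.prems by (cases "k = 0") (auto dest: dvd_imp_le simp: coeff_pCons split: nat.splits)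
  next
    case False
    hence "k \<noteq> 0" using pCons.prems by auto
    have "w dvd (k - w) \<longleftrightarrow> w dvd k" using False by (simp add: dvd_minus_self)
    moreover have "(k - w) div w = k div w - 1" using False pCons.prems by (simp add: le_div_geq)
    moreover have "w dvd k \<Longrightarrow> k div w > 0" using False pCons.prems by auto
    ultimately show ?thesis using False \<open>k \<noteq> 0\<close> pCons.IH[OF pCons.prems, of "k - w"]
      by (auto simp: coeff_pCons split: nat.splits)
  qed
  finally show ?case .
qed

lemma coeff_monom1_mult: "coeff (monom (1::'a::comm_semiring_1) n * p) k = (if k < n then 0 else coeff p (k-n))"
  by (simp add: coeff_monom_mult)

lemma sep_aux:
  fixes w e j j0 :: nat
  assumes "j < w" "j0 < w" "(w-1)*j \<le> w*e + (w-1)*j0" "w dvd (w*e + (w-1)*j0 - (w-1)*j)"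
  shows "j = j0"
proof -
  have w0: "w > 0" using assms by auto
  define D where "D = w*e + (w-1)*j0 - (w-1)*j"
  have "int D = int w * int e + (int w - 1) * int j0 - (int w - 1) * int j"
    using assms(3) w0 unfolding D_def by (simp add: of_nat_diff)
  hence "int D = int w * (int e + int j0 - int j) + (int j - int j0)"
    by (simp add: algebra_simps)
  moreover have "int w dvd int D" using assms(4) unfolding D_def by simp
  ultimately have "int w dvd (int j - int j0)"
    by (metis dvd_add_right_iff dvd_triv_left)
  moreover have "\<bar>int j - int j0\<bar> < int w" using assms(1,2) by auto
  ultimately have "int j - int j0 = 0"
    by (metis dvd_imp_le_int abs_of_nat not_le)
  thus ?thesis by simp
qed

lemma separation:
  fixes RR :: "'a::comm_ring_1 poly poly"
  assumes w: "w > 0" and deg: "RR = 0 \<or> degree RR < w"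
    and ev: "ev2 (monom 1 w) (monom 1 (w-1)) RR = 0"
  shows "RR = 0"
proof -
  have expand: "ev2 (monom 1 w) (monom 1 (w-1)) RR =
      (\<Sum>j<w. monom 1 ((w-1)*j) * pcompose (coeff RR j) (monom 1 w))"
  proof -
    have "ev2 (monom 1 w) (monom 1 (w-1)) RR =
          (\<Sum>j\<le>degree (map_poly (\<lambda>q. pcompose q (monom 1 w)) RR).
             coeff (map_poly (\<lambda>q. pcompose q (monom 1 w)) RR) j * monom 1 (w-1) ^ j)"
      unfolding ev2_def by (rule poly_altdef)
    also have "\<dots> = (\<Sum>j<w. coeff (map_poly (\<lambda>q. pcompose q (monom 1 w)) RR) j * monom 1 (w-1) ^ j)"
    proof -
      have "degree (map_poly (\<lambda>q. pcompose q (monom 1 w)) RR) \<le> degree RR"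
        by (rule map_poly_degree_leq)
      thus ?thesis using deg
        by (intro sum.mono_neutral_cong) (auto simp: coeff_eq_0 coeff_map_poly)
    qed
    also have "\<dots> = (\<Sum>j<w. monom 1 ((w-1)*j) * pcompose (coeff RR j) (monom 1 w))"
      by (simp add: coeff_map_poly monom_power mult.commute)
    finally show ?thesis .
  qed
  show ?thesis
  proof (rule poly_eqI, rule poly_eqI)
    fix j0 e
    show "coeff (coeff RR j0) e = coeff (coeff 0 j0) e"
    proof (cases "j0 < w")
      case False thus ?thesis using deg by (auto simp: coeff_eq_0)
    next
      case True
      define k where "k = w*e + (w-1)*j0"
      have "0 = coeff (\<Sum>j<w. monom 1 ((w-1)*j) * pcompose (coeff RR j) (monom 1 w)) k"
        using ev expand by simp
      also have "\<dots> = (\<Sum>j<w. if (w-1)*j \<le> k \<and> w dvd (k - (w-1)*j)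
                                then coeff (coeff RR j) ((k - (w-1)*j) div w) else 0)"
        by (simp only: coeff_sum coeff_monom1_mult coeff_pcompose_monom[OF w]) (auto intro!: sum.cong)
      also have "\<dots> = coeff (coeff RR j0) e"
      proof -
        have "(\<Sum>j<w. if (w-1)*j \<le> k \<and> w dvd (k - (w-1)*j)
                     then coeff (coeff RR j) ((k - (w-1)*j) div w) else 0)
            = (\<Sum>j<w. if j = j0 then coeff (coeff RR j) e else 0)"
        proof (rule sum.cong[OF refl])
          fix j assume j: "j \<in> {..<w}"
          show "(if (w-1)*j \<le> k \<and> w dvd (k - (w-1)*j) then coeff (coeff RR j) ((k - (w-1)*j) div w) else 0)
              = (if j = j0 then coeff (coeff RR j) e else 0)"
          proof (cases "j = j0")
            case True thus ?thesis using w unfolding k_def by simp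
          next
            case False thus ?thesis using sep_aux[of j w j0 e] j \<open>j0 < w\<close> unfolding k_def by auto
          qed
        qed
        also have "\<dots> = coeff (coeff RR j0) e" using True by simp
        finally show ?thesis .
      qed
      finally show ?thesis by simp
    qed
  qed
qed


interpretation pvs: vector_space "smult :: 'a::field \<Rightarrow> 'a poly \<Rightarrow> 'a poly"
  by unfold_locales (simp_all add: smult_add_right smult_add_left)

lemma indep_degrees:
  fixes S :: "'a::field poly set"
  assumes "0 \<notin> S" "inj_on degree S"
  shows "pvs.independent S"
  unfolding pvs.independent_explicit_finite_subsets
proof (intro allI impI ballI; rule ccontr)
  fix T u v
  assume T: "T \<subseteq> S" "finite T" and sum0: "(\<Sum>v\<in>T. smult (u v) v) = 0"
    and v: "v \<in> T" and uv: "u v \<noteq> 0"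
  define T' where "T' = {v\<in>T. u v \<noteq> 0}"
  have fT': "finite T'" "T' \<noteq> {}" using T v uv unfolding T'_def by auto
  define D where "D = Max (degree ` T')"
  have "D \<in> degree ` T'" unfolding D_def using fT' by (intro Max_in) auto
  then obtain v0 where v0: "v0 \<in> T'" "degree v0 = D" by auto
  have Dmax: "degree x \<le> D" if "x \<in> T'" for x unfolding D_def using fT' that by auto
  have "0 = coeff (\<Sum>v\<in>T. smult (u v) v) D" using sum0 by simp
  also have "\<dots> = (\<Sum>v\<in>T. u v * coeff v D)" by (simp add: coeff_sum)
  also have "\<dots> = u v0 * coeff v0 D + (\<Sum>v\<in>T - {v0}. u v * coeff v D)"
    using T v0 unfolding T'_def by (intro sum.remove) auto
  also have "(\<Sum>v\<in>T - {v0}. u v * coeff v D) = 0"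
  proof (rule sum.neutral, rule ballI)
    fix x assume x: "x \<in> T - {v0}"
    show "u x * coeff x D = 0"
    proof (cases "u x = 0")
      case False
      hence "x \<in> T'" using x unfolding T'_def by auto
      hence "degree x \<le> D" by (rule Dmax)
      moreover have "degree x \<noteq> D"
        using assms(2) x v0 \<open>x \<in> T'\<close> T unfolding T'_def by (auto dest: inj_onD)
      ultimately show ?thesis by (simp add: coeff_eq_0)
    qed simp
  qed
  finally have "u v0 * lead_coeff v0 = 0" using v0 by simp
  moreover have "v0 \<noteq> 0" using assms(1) v0 T unfolding T'_def by auto
  ultimately show False using v0 unfolding T'_def by auto
qed


definition phi :: "'a::comm_ring_1 poly poly \<Rightarrow> 'a poly poly" where
  "phi F = poly (map_poly (map_poly (\<lambda>c. [:c:])) F) [:0, [:0,1:]:]"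

lemma const_hom_add: "[:a + b:] = [:a:] + [:b::'a::comm_ring_1:]" by simp
lemma const_hom_mult: "[:a * b:] = [:a:] * [:b::'a::comm_ring_1:]" by simp

lemma mpc_add: "map_poly (\<lambda>c. [:c:]) (p + q) = map_poly (\<lambda>c. [:c:]) p + map_poly (\<lambda>c. [:c::'a::comm_ring_1:]) q"
  by (rule map_poly_hom_add) simp
lemma mpc_mult: "map_poly (\<lambda>c. [:c:]) (p * q) = map_poly (\<lambda>c. [:c:]) p * map_poly (\<lambda>c. [:c::'a::comm_ring_1:]) q"
  by (rule map_poly_hom_mult) simp_all

lemma phi_add: "phi (F + G) = phi F + phi G"
  unfolding phi_def by (simp add: map_poly_hom_add mpc_add)
lemma phi_mult: "phi (F * G) = phi F * phi G"
  unfolding phi_def by (simp add: map_poly_hom_mult mpc_add mpc_mult)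
lemma phi_zero [simp]: "phi 0 = 0" by (simp add: phi_def)
lemma phi_pCons: "phi (pCons q F) = map_poly (\<lambda>c. [:c:]) q + [:0, [:0,1:]:] * phi F"
  unfolding phi_def by (simp add: map_poly_pCons)
lemma phi_diff: "phi (F - G) = phi F - phi (G::'a::comm_ring_1 poly poly)"
  using phi_add[of "F - G" G] by (simp add: algebra_simps)
lemma phi_one [simp]: "phi 1 = (1::'a::comm_ring_1 poly poly)"
  by (simp add: phi_def)
lemma phi_power: "phi (F ^ n) = phi F ^ n"
  by (induction n) (simp_all add: phi_mult)

lemma coeff_phi:
  "coeff (coeff (phi F) N) b = (if b \<le> N then coeff (coeff F b) (N - b) else 0)"
proof (induction F arbitrary: N b)
  case 0 thus ?case by simp
next
  case (pCons q F)
  have A: "coeff (coeff (map_poly (\<lambda>c. [:c:]) q) N) b = (if b = 0 then coeff q N else 0)"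
    by (simp add: coeff_map_poly coeff_pCons split: nat.splits)
  have B: "coeff (coeff ([:0, [:0,1:]:] * phi F) N) b =
      (if N = 0 \<or> b = 0 then 0 else coeff (coeff (phi F) (N - 1)) (b - 1))"
    by (cases N; cases b) (simp_all add: coeff_pCons)
  show ?case
    unfolding phi_pCons coeff_add A B
    by (cases N; cases b) (simp_all add: pCons.IH coeff_pCons)
qed

lemma phi_eq_0_iff: "phi F = 0 \<longleftrightarrow> F = 0"
proof
  assume "phi F = 0"
  hence "coeff (coeff F b) a = 0" for a b
    using coeff_phi[of F "a + b" b] by simp
  thus "F = 0" by (metis coeff_0 poly_eqI)
qed simp

definition Gp :: "nat \<Rightarrow> 'a::comm_ring_1 poly poly" where
  "Gp w = [:-[:0,1:], 1:]^w - [:[:0,1:]^(w-1):]"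

lemma degree_Gp: assumes "w \<ge> 1" shows "degree (Gp w :: 'a::idom poly poly) = w"
  and "lead_coeff (Gp w :: 'a::idom poly poly) = 1"
proof -
  have dg: "degree ([:-[:0,1:], 1:] :: 'a poly poly) = 1" by simp
  have m: "lead_coeff ([:-[:0,1:], 1:] :: 'a poly poly) = 1" by (subst dg) simp
  have d1: "degree ([:-[:0,1:], 1:]^w :: 'a poly poly) = w"
    by (subst degree_power_eq) (use dg in auto)
  have l1: "lead_coeff ([:-[:0,1:], 1:]^w :: 'a poly poly) = 1"
    by (simp only: lead_coeff_power m) simp
  have e: "Gp w = [:-[:0,1:], 1:]^w + [:-([:0,1:]^(w-1)):]" unfolding Gp_def by simp
  show dG: "degree (Gp w :: 'a poly poly) = w" unfolding e
    using d1 assms by (subst degree_add_eq_left) auto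
  show "lead_coeff (Gp w :: 'a poly poly) = 1" unfolding dG
    using l1 d1 assms unfolding Gp_def by (auto simp: coeff_pCons split: nat.splits)
qed


lemma X_pow: "[:0, 1:] ^ n = (monom 1 n :: 'a::comm_semiring_1 poly)"
  by (simp add: monom_altdef)

lemma ev2_one [simp]: "ev2 u v 1 = 1" by (simp add: ev2_def pcompose_1)
lemma ev2_power: "ev2 u v (P ^ n) = ev2 u v P ^ n"
  by (induction n) (simp_all add: ev2_mult)
lemma ev2_diff: "ev2 u v (P - Q) = ev2 u v P - ev2 u v (Q :: 'a::comm_ring_1 poly poly)"
  using ev2_add[of u v "P - Q" Q] by (simp add: algebra_simps)

lemma ev2_Gp:
  assumes "w \<ge> 1"
  shows "ev2 (monom 1 w) (monom 1 w + monom 1 (w-1)) (Gp w :: 'a::comm_ring_1 poly poly) = 0"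
proof -
  let ?u = "monom 1 w :: 'a poly" and ?v = "monom 1 w + monom 1 (w-1) :: 'a poly"
  have "ev2 ?u ?v [:-[:0,1:], 1:] = - ?u + ?v"
    unfolding ev2_def by (simp add: map_poly_pCons pcompose_pCons pcompose_1)
  also have "\<dots> = monom 1 (w-1)" by simp
  finally have a: "ev2 ?u ?v [:-[:0,1:], 1:] = monom 1 (w-1)" .
  have pp: "pcompose ([:0,1:]^n) q = q ^ n" for n and q :: "'a poly"
    by (induction n) (simp_all add: pcompose_mult pcompose_1 pcompose_pCons)
  have b: "ev2 ?u ?v [:[:0,1:]^(w-1):] = monom 1 (w * (w-1))"
    by (simp add: ev2_const pp monom_power)
  show ?thesis unfolding Gp_def ev2_diff ev2_power a b
    by (simp add: monom_power mult.commute)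
qed


lemma ev2_shift:
  "ev2 u v (pcompose RR [:[:0,1:], 1:]) = ev2 u (u + v) (RR :: 'a::comm_ring_1 poly poly)"
proof -
  have h: "map_poly (\<lambda>q. pcompose q u) (pcompose RR [:[:0,1:], 1:]) =
      pcompose (map_poly (\<lambda>q. pcompose q u) RR) (map_poly (\<lambda>q. pcompose q u) [:[:0,1:], 1:])"
    by (rule map_poly_hom_pcompose) (simp_all add: pcompose_add pcompose_mult)
  have "map_poly (\<lambda>q. pcompose q u) [:[:0,1:], 1:] = [:u, 1:]"
    by (simp add: map_poly_pCons pcompose_pCons pcompose_1)
  thus ?thesis unfolding ev2_def h by (simp add: poly_pcompose)
qed

lemma phi_Gp:
  assumes "w \<ge> 1"
  shows "coeff (phi (Gp w :: 'a::idom poly poly)) n =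
           (if w = n then [:-1,1:]^w else 0) - (if w - 1 = n then 1 else 0)"
proof -
  have c1: "[:-1:] = (-1 :: 'a poly)"
    by (rule poly_eqI) (simp add: coeff_pCons split: nat.split)
  have m1: "map_poly (\<lambda>c. [:c:]) (-1 :: 'a poly) = -1"
    by (rule poly_eqI) (simp add: coeff_map_poly c1)
  have m2: "map_poly (\<lambda>c. [:c:]) (-[:0,1::'a:]) = [:0, -1:]"
    by (rule poly_eqI) (simp add: coeff_map_poly coeff_pCons c1 split: nat.split)
  have p1: "phi [:1::'a poly:] = 1" using phi_one by (simp add: one_pCons)
  have "phi [:-[:0,1:], 1::'a poly:] = [:0, -1:] + [:0, [:0,1:]:]"
    by (subst phi_pCons) (simp only: m2 p1 mult_1_right)
  also have "\<dots> = [:0, [:-1, 1:]:]"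
  proof -
    have "[:0, 1:] - 1 = [:-1, 1::'a:]"
      by (rule poly_eqI) (simp add: coeff_pCons split: nat.split)
    thus ?thesis by simp
  qed
  also have "\<dots> = monom [:-1,1:] 1" by (simp add: monom_Suc monom_0)
  finally have a: "phi [:-[:0,1:], 1::'a poly:] = monom [:-1,1:] 1" .
  have b: "phi [:[:0,1::'a:]^(w-1):] = monom 1 (w-1)"
    by (simp add: phi_pCons X_pow map_poly_monom)
  show ?thesis unfolding Gp_def phi_diff phi_power a b by (simp only: coeff_diff monom_power coeff_monom mult_1)
qed

lemma degree_phi_Gp:
  assumes "w \<ge> 1"
  shows "degree (phi (Gp w :: 'a::idom poly poly)) = w"
    "lead_coeff (phi (Gp w :: 'a::idom poly poly)) = [:-1,1:]^w"
proof -
  have nz: "([:-1,1:]^w :: 'a poly) \<noteq> 0" by simp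
  have "degree (phi (Gp w :: 'a poly poly)) \<le> w"
    by (rule degree_le) (use assms in \<open>auto simp: phi_Gp\<close>)
  moreover have "coeff (phi (Gp w :: 'a poly poly)) w \<noteq> 0"
    using assms nz by (simp add: phi_Gp)
  ultimately show d: "degree (phi (Gp w :: 'a poly poly)) = w"
    using le_degree by (metis antisym)
  show "lead_coeff (phi (Gp w :: 'a poly poly)) = [:-1,1:]^w"
    unfolding d using assms by (simp add: phi_Gp)
qed

lemma BL:
  fixes A B :: "'k \<Rightarrow> 'a::field poly"
  assumes w: "w \<ge> 1" and K: "finite K" "card K \<le> w"
    and degB: "\<And>k. k \<in> K \<Longrightarrow> CHAR('a) = 0 \<or> degree (B k) < CHAR('a)"
    and ev: "ev2 (monom 1 w) (monom 1 w + monom 1 (w-1))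
               (\<Sum>k\<in>K. [:A k:] * map_poly (\<lambda>c. [:c:]) (B k)) = 0"
  shows "(\<Sum>k\<in>K. [:A k:] * map_poly (\<lambda>c. [:c:]) (B k)) = 0"
proof (rule ccontr)
  define P where "P = (\<Sum>k\<in>K. [:A k:] * map_poly (\<lambda>c. [:c:]) (B k))"
  assume "(\<Sum>k\<in>K. [:A k:] * map_poly (\<lambda>c. [:c:]) (B k)) \<noteq> 0"
  hence Pnz: "P \<noteq> 0" unfolding P_def .
  have coeffP: "coeff P b = (\<Sum>k\<in>K. smult (coeff (B k) b) (A k))" for b
    unfolding P_def by (simp add: coeff_sum coeff_map_poly mult.commute)
  have spanP: "coeff P b \<in> pvs.span (A ` K)" for b
    unfolding coeffP by (intro pvs.span_sum pvs.span_scale pvs.span_base) auto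
  have degP: "CHAR('a) = 0 \<or> b < CHAR('a)" if "coeff P b \<noteq> 0" for b
  proof -
    have "\<exists>k\<in>K. coeff (B k) b \<noteq> 0"
    proof (rule ccontr)
      assume "\<not> (\<exists>k\<in>K. coeff (B k) b \<noteq> 0)"
      hence "coeff P b = 0" unfolding coeffP by (intro sum.neutral) auto
      thus False using that by simp
    qed
    then obtain k where k: "k \<in> K" "coeff (B k) b \<noteq> 0" by blast
    hence "b \<le> degree (B k)" using le_degree by blast
    thus ?thesis using degB[OF k(1)] by auto
  qed
  \<comment> \<open>divisibility by G\<close>
  define G where "G = (Gp w :: 'a poly poly)"
  have dG: "degree G = w" and lG: "lead_coeff G = 1" using degree_Gp[OF w] unfolding G_def by auto
  have Gnz: "G \<noteq> 0" using lG by auto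
  obtain Q Rm where qr: "pseudo_divmod P G = (Q, Rm)" by (cases "pseudo_divmod P G") auto
  have PGQ: "P = G * Q + Rm" using pseudo_divmod(1)[OF Gnz qr] lG by simp
  have Rdeg: "Rm = 0 \<or> degree Rm < w" using pseudo_divmod(2)[OF Gnz qr] dG by simp
  let ?u = "monom 1 w :: 'a poly" and ?v = "monom 1 w + monom 1 (w-1) :: 'a poly"
  have evP: "ev2 ?u ?v P = 0" using ev unfolding P_def .
  have evG: "ev2 ?u ?v G = 0" using ev2_Gp[OF w] unfolding G_def .
  have "ev2 ?u ?v Rm = 0"
    using evP unfolding PGQ ev2_add ev2_mult evG by simp
  define R2 where "R2 = pcompose Rm [:[:0,1:], 1:]"
  have "ev2 ?u (monom 1 (w-1)) R2 = 0"
    unfolding R2_def ev2_shift using \<open>ev2 ?u ?v Rm = 0\<close> by simp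
  moreover have "degree R2 = degree Rm" unfolding R2_def by (simp add: degree_pcompose)
  ultimately have "R2 = 0" using Rdeg w by (intro separation[of w R2]) (auto simp: R2_def)
  hence Rm0: "Rm = 0" unfolding R2_def by (rule pcompose_eq_0) simp
  hence PGQ': "P = G * Q" using PGQ by simp
  hence Qnz: "Q \<noteq> 0" using Pnz by auto
  \<comment> \<open>homogenisation\<close>
  have phiP: "phi P = phi G * phi Q" using PGQ' phi_mult by simp
  have phiQnz: "phi Q \<noteq> 0" using Qnz phi_eq_0_iff by blast
  define LL where "LL = lead_coeff (phi P)"
  define N where "N = degree (phi P)"
  have L0: "LL = lead_coeff (phi G) * lead_coeff (phi Q)" unfolding LL_def phiP by (rule lead_coeff_mult)
  have lpG: "lead_coeff (phi G) = [:-1,1:]^w" unfolding G_def by (rule degree_phi_Gp(2)[OF w])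
  have LL: "LL = [:-1,1:]^w * lead_coeff (phi Q)" unfolding L0 lpG ..
  have Lnz: "LL \<noteq> 0" unfolding LL using phiQnz by simp
  have Ldvd: "[:-1,1:]^w dvd LL" unfolding LL by simp
  have coeffL: "coeff LL b = (if b \<le> N then coeff (coeff P b) (N - b) else 0)" for b
    unfolding LL_def N_def by (rule coeff_phi)
  define Bset where "Bset = {b. coeff LL b \<noteq> 0}"
  have Bset_prop: "b \<le> N \<and> coeff (coeff P b) (N - b) \<noteq> 0" if "b \<in> Bset" for b
    using that unfolding Bset_def coeffL by (auto split: if_splits)
  have finB: "finite Bset"
    by (rule finite_subset[of _ "{..degree LL}"]) (auto simp: Bset_def dest: le_degree)
  have degL: "CHAR('a) = 0 \<or> degree LL < CHAR('a)"
  proof -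
    have "degree LL \<in> Bset" using Lnz unfolding Bset_def by simp
    hence "coeff P (degree LL) \<noteq> 0" using Bset_prop by fastforce
    thus ?thesis by (rule degP)
  qed
  have cardB: "\<not> card Bset \<le> w"
    using few_terms_zero[of LL w] Ldvd degL Lnz unfolding Bset_def by auto
  have degslice: "degree (coeff P b) = N - b" if "b \<in> Bset" for b
  proof (rule antisym)
    show "degree (coeff P b) \<le> N - b"
    proof (rule degree_le, intro allI impI)
      fix a assume a: "N - b < a"
      have "coeff (coeff (phi P) (a + b)) b = coeff (coeff P b) a" by (simp add: coeff_phi)
      moreover have "coeff (phi P) (a + b) = 0"
        using a Bset_prop[OF that] unfolding N_def by (intro coeff_eq_0) auto
      ultimately show "coeff (coeff P b) a = 0" by simp
    qed
    show "N - b \<le> degree (coeff P b)" using Bset_prop[OF that] le_degree by blast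
  qed
  define S where "S = (\<lambda>b. coeff P b) ` Bset"
  have inj: "inj_on (\<lambda>b. coeff P b) Bset"
  proof (rule inj_onI)
    fix b b' assume "b \<in> Bset" "b' \<in> Bset" "coeff P b = coeff P b'"
    hence "N - b = N - b'" using degslice by metis
    moreover have "b \<le> N" "b' \<le> N" using Bset_prop \<open>b \<in> Bset\<close> \<open>b' \<in> Bset\<close> by auto
    ultimately show "b = b'" by linarith
  qed
  have cardS: "card S = card Bset" unfolding S_def using inj by (rule card_image)
  have indep: "pvs.independent S"
  proof (rule indep_degrees)
    show "0 \<notin> S" unfolding S_def using Bset_prop by fastforce
    show "inj_on degree S"
    proof (rule inj_onI)
      fix p q assume "p \<in> S" "q \<in> S" "degree p = degree q"
      then obtain b b' where "b \<in> Bset" "b' \<in> Bset" "p = coeff P b" "q = coeff P b'"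
        unfolding S_def by auto
      thus "p = q" using \<open>degree p = degree q\<close> degslice Bset_prop by (metis diff_diff_cancel)
    qed
  qed
  have "S \<subseteq> pvs.span (A ` K)" unfolding S_def using spanP by auto
  hence "card S \<le> card (A ` K)" using pvs.independent_span_bound[OF _ indep] K by auto
  also have "\<dots> \<le> card K" using K(1) by (rule card_image_le)
  finally show False using cardS cardB K by simp
qed


section \<open>Monomial algebra\<close>

definition tdeg :: "((nat \<times> nat) \<Rightarrow>\<^sub>0 nat) \<Rightarrow> nat" where
  "tdeg m = (\<Sum>v\<in>Poly_Mapping.keys m. Poly_Mapping.lookup m v)"

lemma tdeg_superset: "finite K \<Longrightarrow> Poly_Mapping.keys m \<subseteq> K \<Longrightarrow> tdeg m = (\<Sum>v\<in>K. Poly_Mapping.lookup m v)"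
  unfolding tdeg_def by (rule sum.mono_neutral_left) (auto simp: in_keys_iff)

lemma tdeg_add: "tdeg (m1 + m2) = tdeg m1 + tdeg m2"
proof -
  let ?K = "Poly_Mapping.keys m1 \<union> Poly_Mapping.keys m2"
  have "tdeg (m1 + m2) = (\<Sum>v\<in>?K. Poly_Mapping.lookup (m1+m2) v)"
    using keys_add[of m1 m2] by (intro tdeg_superset) auto
  also have "\<dots> = (\<Sum>v\<in>?K. Poly_Mapping.lookup m1 v) + (\<Sum>v\<in>?K. Poly_Mapping.lookup m2 v)"
    by (simp add: lookup_add sum.distrib)
  also have "\<dots> = tdeg m1 + tdeg m2" by (subst (1 2) tdeg_superset[of ?K]) auto
  finally show ?thesis .
qed

lemma mconst_mult_expand:
  "mconst c * p = (\<Sum>m\<in>Poly_Mapping.keys p. Poly_Mapping.single m (c * Poly_Mapping.lookup p m))"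
proof -
  have "mconst c * p = mconst c * (\<Sum>m\<in>Poly_Mapping.keys p. Poly_Mapping.single m (Poly_Mapping.lookup p m))"
    using mpoly_expand[of p] by simp
  also have "\<dots> = (\<Sum>m\<in>Poly_Mapping.keys p. Poly_Mapping.single m (c * Poly_Mapping.lookup p m))"
    by (simp add: sum_distrib_left mconst_def mult_single)
  finally show ?thesis .
qed

lemma lookup_mconst_mult: "Poly_Mapping.lookup (mconst c * p) m = c * Poly_Mapping.lookup p m"
  unfolding mconst_mult_expand
  by (simp add: lookup_sum lookup_single when_def in_keys_iff)

lemma keys_mconst_mult: "Poly_Mapping.keys (mconst c * p) \<subseteq> Poly_Mapping.keys p"
  by (auto simp: in_keys_iff lookup_mconst_mult)

lemma mconst_add: "mconst (a + b) = mconst a + mconst b"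
  by (simp add: mconst_def single_add)
lemma mconst_mult: "mconst (a * b) = mconst a * mconst b"
  by (simp add: mconst_def mult_single)
lemma mconst_0 [simp]: "mconst 0 = 0" by (simp add: mconst_def)
lemma mconst_1 [simp]: "mconst 1 = 1" by (simp add: mconst_def)

lemma lookup_split_mult:
  fixes p q :: "'a::comm_ring_1 mpoly"
  assumes p: "\<And>m. m \<in> Poly_Mapping.keys p \<Longrightarrow> Poly_Mapping.keys m \<subseteq> VA"
    and q: "\<And>m. m \<in> Poly_Mapping.keys q \<Longrightarrow> Poly_Mapping.keys m \<subseteq> VB"
    and dis: "VA \<inter> VB = {}"
    and m1: "Poly_Mapping.keys m1 \<subseteq> VA" and m2: "Poly_Mapping.keys m2 \<subseteq> VB"
  shows "Poly_Mapping.lookup (p * q) (m1 + m2) = Poly_Mapping.lookup p m1 * Poly_Mapping.lookup q m2"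
proof -
  let ?P = "Poly_Mapping.keys p" and ?Q = "Poly_Mapping.keys q"
  have uniq: "m = m1 \<and> m' = m2" if "m \<in> ?P" "m' \<in> ?Q" "m + m' = m1 + m2" for m m'
  proof -
    have km: "Poly_Mapping.keys m \<subseteq> VA" "Poly_Mapping.keys m' \<subseteq> VB" using p q that by auto
    have eq: "Poly_Mapping.lookup m v + Poly_Mapping.lookup m' v = Poly_Mapping.lookup m1 v + Poly_Mapping.lookup m2 v" for v
      using that(3) by (metis lookup_add)
    have z: "v \<notin> K \<Longrightarrow> Poly_Mapping.keys x \<subseteq> K \<Longrightarrow> Poly_Mapping.lookup x v = 0" for v x K
      by (auto simp: in_keys_iff)
    have dv: "v \<in> VA \<Longrightarrow> v \<notin> VB" for v using dis by blast
    have "m = m1"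
    proof (rule poly_mapping_eqI)
      fix v show "Poly_Mapping.lookup m v = Poly_Mapping.lookup m1 v"
        using eq[of v] z[of v VA m] z[of v VA m1] z[of v VB m'] z[of v VB m2] km m1 m2 dv[of v] by (cases "v \<in> VA") auto
    qed
    moreover have "m' = m2"
    proof (rule poly_mapping_eqI)
      fix v show "Poly_Mapping.lookup m' v = Poly_Mapping.lookup m2 v"
        using eq[of v] z[of v VA m] z[of v VA m1] z[of v VB m'] z[of v VB m2] km m1 m2 dv[of v] by (cases "v \<in> VA") auto
    qed
    ultimately show ?thesis ..
  qed
  have "p * q = (\<Sum>m\<in>?P. Poly_Mapping.single m (Poly_Mapping.lookup p m)) * (\<Sum>m\<in>?Q. Poly_Mapping.single m (Poly_Mapping.lookup q m))"
    using mpoly_expand[of p] mpoly_expand[of q] by simp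
  also have "\<dots> = (\<Sum>m\<in>?P. \<Sum>m'\<in>?Q. Poly_Mapping.single (m+m') (Poly_Mapping.lookup p m * Poly_Mapping.lookup q m'))"
    by (simp add: sum_product mult_single)
  finally have "Poly_Mapping.lookup (p * q) (m1 + m2) = (\<Sum>m\<in>?P. \<Sum>m'\<in>?Q. if m + m' = m1 + m2 then Poly_Mapping.lookup p m * Poly_Mapping.lookup q m' else 0)"
    by (simp add: lookup_sum lookup_single when_def eq_commute)
  also have "\<dots> = (\<Sum>m\<in>?P. if m = m1 then (\<Sum>m'\<in>?Q. if m' = m2 then Poly_Mapping.lookup p m * Poly_Mapping.lookup q m' else 0) else 0)"
  proof (rule sum.cong[OF refl])
    fix m assume m: "m \<in> ?P"
    show "(\<Sum>m'\<in>?Q. if m + m' = m1 + m2 then Poly_Mapping.lookup p m * Poly_Mapping.lookup q m' else 0) =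
      (if m = m1 then (\<Sum>m'\<in>?Q. if m' = m2 then Poly_Mapping.lookup p m * Poly_Mapping.lookup q m' else 0) else 0)"
    proof (cases "m = m1")
      case True
      thus ?thesis using uniq m by (auto intro!: sum.cong)
    next
      case False
      thus ?thesis using uniq m by (auto intro!: sum.neutral)
    qed
  qed
  also have "\<dots> = Poly_Mapping.lookup p m1 * Poly_Mapping.lookup q m2"
    by (cases "m1 \<in> ?P"; cases "m2 \<in> ?Q") (simp_all add: in_keys_iff)
  finally show ?thesis .
qed


lemma length_vals [simp]: "length (vals C g) = g"
  by (induction g) auto

lemma vals_nth: "k < g \<Longrightarrow> vals C g ! k = circ_val C k"
proof (induction g)
  case 0 thus ?case by simp
next
  case (Suc g)
  show ?case
  proof (cases "k < g")
    case True thus ?thesis using Suc by (simp add: nth_append)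
  next
    case False hence "k = g" using Suc by simp
    thus ?thesis by (simp add: circ_val_def)
  qed
qed

lemma getv_vals: "k < g \<Longrightarrow> getv (vals C g) k = circ_val C k"
  by (simp add: getv_def vals_nth)

lemma circ_val_eq: "circ_val C g = gate_val C (vals C g) g"
  by (simp add: circ_val_def nth_append)

lemma sum_list_map_zero: "(\<And>x. x \<in> set xs \<Longrightarrow> g x = 0) \<Longrightarrow> sum_list (map g xs) = (0::'b::monoid_add)"
  by (induction xs) auto

locale circ =
  fixes C :: "nat \<Rightarrow> 'a::field gate" and N :: nat and S :: "nat \<Rightarrow> nat set" and d n rt :: nat
  assumes wf: "circuit_wf C N" and sml: "set_multilinear C N S d n rt"
begin

abbreviation f where "f g \<equiv> circ_val C g"

lemma f_Inp: "g < N \<Longrightarrow> C g = Inp i j \<Longrightarrow> f g = mvar (i,j)"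
  by (simp add: circ_val_eq gate_val_def)

lemma f_Add: "g < N \<Longrightarrow> C g = Add cs \<Longrightarrow> f g = (\<Sum>(c,k)\<leftarrow>cs. mconst c * f k)"
proof -
  assume g: "g < N" "C g = Add cs"
  hence lt: "\<forall>(c,k)\<in>set cs. k < g" using wf unfolding circuit_wf_def by fastforce
  have "f g = (\<Sum>(c,k)\<leftarrow>cs. mconst c * getv (vals C g) k)" using g by (simp add: circ_val_eq gate_val_def)
  also have "\<dots> = (\<Sum>(c,k)\<leftarrow>cs. mconst c * f k)"
    by (rule arg_cong[where f=sum_list], rule map_cong[OF refl]) (use lt in \<open>auto simp: getv_vals\<close>)
  finally show ?thesis .
qed

lemma f_Mul: "g < N \<Longrightarrow> C g = Mul a b \<Longrightarrow> f g = f a * f b"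
proof -
  assume g: "g < N" "C g = Mul a b"
  hence "a < g" "b < g" using wf unfolding circuit_wf_def by fastforce+
  thus ?thesis using g by (simp add: circ_val_eq gate_val_def getv_vals)
qed

lemma Add_lt: "g < N \<Longrightarrow> C g = Add cs \<Longrightarrow> (c,k) \<in> set cs \<Longrightarrow> k < g"
  using wf unfolding circuit_wf_def by fastforce
lemma Mul_lt: "g < N \<Longrightarrow> C g = Mul a b \<Longrightarrow> a < g \<and> b < g"
  using wf unfolding circuit_wf_def by fastforce

lemma sml_S: "g < N \<Longrightarrow> S g \<subseteq> {1..d}"
  using sml unfolding set_multilinear_def by blast
lemma sml_Inp: "g < N \<Longrightarrow> C g = Inp i j \<Longrightarrow> 1 \<le> i \<and> i \<le> d \<and> 1 \<le> j \<and> j \<le> n \<and> S g = {i}"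
  using sml unfolding set_multilinear_def by force
lemma sml_Add: "g < N \<Longrightarrow> C g = Add cs \<Longrightarrow> (c,k) \<in> set cs \<Longrightarrow> S k = S g"
  using sml unfolding set_multilinear_def by force
lemma sml_Mul: "g < N \<Longrightarrow> C g = Mul a b \<Longrightarrow> S a \<inter> S b = {} \<and> S g = S a \<union> S b"
  using sml unfolding set_multilinear_def by force

lemma no_ptree_zero: "g < N \<Longrightarrow> \<not> (\<exists>t. is_ptree C g t) \<Longrightarrow> f g = 0"
proof (induction g rule: less_induct)
  case (less g)
  show ?case
  proof (cases "C g")
    case (Inp i j) thus ?thesis using less.prems is_ptree.inp by blast
  next
    case (Add cs)
    have "mconst c * f k = 0" if "(c,k) \<in> set cs" for c k
    proof -
      have "k < g" using Add_lt[OF less.prems(1) Add that] .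
      moreover have "\<not> (\<exists>t. is_ptree C k t)" using less.prems(2) is_ptree.add[of C g cs c k, OF Add that] by blast
      ultimately show ?thesis using less.IH less.prems(1) by simp
    qed
    hence "(\<Sum>(c,k)\<leftarrow>cs. mconst c * f k) = 0" by (intro sum_list_map_zero) auto
    thus ?thesis using f_Add[OF less.prems(1) Add] by simp
  next
    case (Mul a b)
    have lt: "a < g" "b < g" using Mul_lt[OF less.prems(1) Mul] by auto
    have "\<not> (\<exists>t. is_ptree C a t) \<or> \<not> (\<exists>t. is_ptree C b t)"
      using less.prems(2) is_ptree.mul[of C g a b, OF Mul] by blast
    hence "f a = 0 \<or> f b = 0" using less.IH lt less.prems(1) by auto
    thus ?thesis using f_Mul[OF less.prems(1) Mul] by auto
  qed
qed

definition Vars :: "nat set \<Rightarrow> (nat \<times> nat) set" where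
  "Vars I = {v. fst v \<in> I \<and> snd v \<in> {1..n}}"

lemma support: "g < N \<Longrightarrow> m \<in> Poly_Mapping.keys (f g) \<Longrightarrow>
    Poly_Mapping.keys m \<subseteq> Vars (S g) \<and> tdeg m \<le> card (S g)"
proof (induction g arbitrary: m rule: less_induct)
  case (less g)
  show ?case
  proof (cases "C g")
    case (Inp i j)
    have "m = Poly_Mapping.single (i,j) 1" using less.prems f_Inp[OF less.prems(1) Inp]
      by (simp add: mvar_def)
    thus ?thesis using sml_Inp[OF less.prems(1) Inp] by (simp add: Vars_def tdeg_def)
  next
    case (Add cs)
    have sub: "Poly_Mapping.keys (\<Sum>(c,k)\<leftarrow>cs'. mconst c * f k) \<subseteq> (\<Union>(c,k)\<in>set cs'. Poly_Mapping.keys (f k))" for cs'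
    proof (induction cs')
      case Nil thus ?case by simp
    next
      case (Cons x cs')
      obtain c k where x: "x = (c,k)" by (cases x)
      show ?case using Cons keys_add[of "mconst c * f k" "\<Sum>(c,k)\<leftarrow>cs'. mconst c * f k"]
        keys_mconst_mult[of c "f k"] by (auto simp: x)
    qed
    have "m \<in> Poly_Mapping.keys (\<Sum>(c,k)\<leftarrow>cs. mconst c * f k)"
      using less.prems(2) f_Add[OF less.prems(1) Add] by simp
    hence "m \<in> (\<Union>(c,k)\<in>set cs. Poly_Mapping.keys (f k))"
      by (rule subsetD[OF sub])
    then obtain c k where ck: "(c,k) \<in> set cs" "m \<in> Poly_Mapping.keys (f k)" by blast
    have "k < g" using Add_lt[OF less.prems(1) Add ck(1)] .
    thus ?thesis using less.IH[OF \<open>k < g\<close> _ ck(2)] less.prems(1) sml_Add[OF less.prems(1) Add ck(1)] by simp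
  next
    case (Mul a b)
    have lt: "a < g" "b < g" using Mul_lt[OF less.prems(1) Mul] by auto
    obtain m1 m2 where m: "m = m1 + m2" "m1 \<in> Poly_Mapping.keys (f a)" "m2 \<in> Poly_Mapping.keys (f b)"
      using less.prems keys_mult[of "f a" "f b"] f_Mul[OF less.prems(1) Mul] by auto
    have ih1: "Poly_Mapping.keys m1 \<subseteq> Vars (S a) \<and> tdeg m1 \<le> card (S a)"
      using less.IH[OF lt(1) _ m(2)] less.prems(1) lt by simp
    have ih2: "Poly_Mapping.keys m2 \<subseteq> Vars (S b) \<and> tdeg m2 \<le> card (S b)"
      using less.IH[OF lt(2) _ m(3)] less.prems(1) lt by simp
    have sab: "S a \<inter> S b = {}" "S g = S a \<union> S b" using sml_Mul[OF less.prems(1) Mul] by auto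
    have fin: "finite (S a)" "finite (S b)"
      using sml_S[of a] sml_S[of b] lt less.prems(1) by (auto intro: finite_subset)
    have "Poly_Mapping.keys m \<subseteq> Vars (S g)"
      using m(1) keys_add[of m1 m2] ih1 ih2 sab by (auto simp: Vars_def)
    moreover have "tdeg m \<le> card (S g)"
    proof -
      have "tdeg m = tdeg m1 + tdeg m2" using m(1) tdeg_add by simp
      also have "\<dots> \<le> card (S a) + card (S b)" using ih1 ih2 by simp
      also have "\<dots> = card (S g)" using sab fin by (simp add: card_Un_disjoint)
      finally show ?thesis .
    qed
    ultimately show ?thesis ..
  qed
qed

end


fun psub :: "ptree \<Rightarrow> nat list \<Rightarrow> ptree" where
  "psub t [] = t"
| "psub (PT g ts) (k # p) = psub (ts ! k) p"

fun prepl :: "ptree \<Rightarrow> nat list \<Rightarrow> ptree \<Rightarrow> ptree" where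
  "prepl t [] t' = t'"
| "prepl (PT g ts) (k # p) t' = PT g (ts[k := prepl (ts ! k) p t'])"

fun ptroot :: "ptree \<Rightarrow> nat" where "ptroot (PT g ts) = g"
fun lab :: "stree \<Rightarrow> nat set" where "lab (SNode l ts) = l"

lemma pgate_psub: "pgate t p = ptroot (psub t p)"
  by (induction t p rule: pgate.induct) auto

lemma psub_append: "psub t (p @ q) = psub (psub t p) q"
  by (induction t p rule: psub.induct) auto

lemma pgate_append: "pgate t (p @ q) = pgate (psub t p) q"
  by (simp add: pgate_psub psub_append)

lemma ptree_root: "is_ptree C g t \<Longrightarrow> ptroot t = g"
  by (induction rule: is_ptree.induct) auto

lemma pos_cons_iff: "pos (SNode l ts) (k # p) \<longleftrightarrow> k < length ts \<and> pos (ts ! k) p"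
  by (auto elim: pos.cases intro: pos.child)

lemma subtree_shape: "pos (shape S t) p \<Longrightarrow> subtree (shape S t) p = shape S (psub t p)"
proof (induction p arbitrary: t)
  case Nil thus ?case by simp
next
  case (Cons k p)
  obtain g ts where t: "t = PT g ts" by (cases t)
  show ?case using Cons unfolding t by (auto simp: pos_cons_iff)
qed

lemma ptree_psub: "is_ptree C g t \<Longrightarrow> pos (shape S t) p \<Longrightarrow> is_ptree C (pgate t p) (psub t p)"
proof (induction p arbitrary: g t)
  case Nil thus ?case using ptree_root by (cases t) fastforce
next
  case (Cons k p)
  from Cons.prems(1) show ?case
  proof (cases rule: is_ptree.cases)
    case (inp i j) thus ?thesis using Cons.prems(2) by (simp add: pos_cons_iff)
  next
    case (add cs c k' t1)
    hence "k = 0" "pos (shape S t1) p" using Cons.prems(2) by (auto simp: pos_cons_iff)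
    thus ?thesis using Cons.IH[OF add(4)] add by simp
  next
    case (mul a b ta tb)
    hence kk: "k < 2" "pos ([shape S ta, shape S tb] ! k) p" using Cons.prems(2) by (auto simp: pos_cons_iff)
    have "[shape S ta, shape S tb] = map (shape S) [ta,tb]" by simp
    have "[shape S ta, shape S tb] ! k = shape S ([ta,tb] ! k)" using kk(1) by (cases k) auto
    hence k: "k < 2" "pos (shape S ([ta,tb] ! k)) p" using kk by auto
    show ?thesis
    proof (cases "k = 0")
      case True thus ?thesis using Cons.IH[OF mul(3)] mul k by simp
    next
      case False hence "k = 1" using k by simp
      thus ?thesis using Cons.IH[OF mul(4)] mul k by simp
    qed
  qed
qed

lemma ptree_prepl:
  "is_ptree C g t \<Longrightarrow> pos (shape S t) p \<Longrightarrow> is_ptree C (pgate t p) t' \<Longrightarrow>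
    is_ptree C g (prepl t p t') \<and> psub (prepl t p t') p = t'"
proof (induction p arbitrary: g t)
  case Nil thus ?case using ptree_root[of C g t] by (cases t) auto
next
  case (Cons k p)
  from Cons.prems(1) show ?case
  proof (cases rule: is_ptree.cases)
    case (inp i j) thus ?thesis using Cons.prems(2) by (simp add: pos_cons_iff)
  next
    case (add cs c k' t1)
    hence "k = 0" "pos (shape S t1) p" using Cons.prems(2) by (auto simp: pos_cons_iff)
    hence "is_ptree C k' (prepl t1 p t') \<and> psub (prepl t1 p t') p = t'"
      using Cons.IH[OF add(4)] add Cons.prems(3) by simp
    thus ?thesis using add \<open>k = 0\<close> is_ptree.add[of C g cs c k'] by simp
  next
    case (mul a b ta tb)
    hence kk: "k < 2" "pos ([shape S ta, shape S tb] ! k) p" using Cons.prems(2) by (auto simp: pos_cons_iff)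
    have "[shape S ta, shape S tb] = map (shape S) [ta,tb]" by simp
    have "[shape S ta, shape S tb] ! k = shape S ([ta,tb] ! k)" using kk(1) by (cases k) auto
    hence k: "k < 2" "pos (shape S ([ta,tb] ! k)) p" using kk by auto
    show ?thesis
    proof (cases "k = 0")
      case True
      hence "is_ptree C a (prepl ta p t') \<and> psub (prepl ta p t') p = t'"
        using Cons.IH[OF mul(3)] mul k Cons.prems(3) by simp
      thus ?thesis using mul True is_ptree.mul[of C g a b] by simp
    next
      case False hence "k = 1" using k by simp
      hence "is_ptree C b (prepl tb p t') \<and> psub (prepl tb p t') p = t'"
        using Cons.IH[OF mul(4)] mul k Cons.prems(3) by simp
      thus ?thesis using mul \<open>k = 1\<close> is_ptree.mul[of C g a b] by simp
    qed
  qed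
qed

lemma pos_append: "pos T p \<Longrightarrow> pos (subtree T p) q \<Longrightarrow> pos T (p @ q) \<and> subtree T (p @ q) = subtree (subtree T p) q"
proof (induction p arbitrary: T)
  case Nil thus ?case by simp
next
  case (Cons k p)
  obtain l ts where T: "T = SNode l ts" by (cases T)
  show ?case using Cons unfolding T by (auto simp: pos_cons_iff)
qed

lemma depth_child: "depth_le (SNode l ts) h \<Longrightarrow> k < length ts \<Longrightarrow> h \<ge> 1 \<and> depth_le (ts ! k) (h - 1)"
  unfolding depth_le_def
proof (intro conjI allI impI)
  assume d: "\<forall>p. pos (SNode l ts) p \<longrightarrow> length p \<le> h" and k: "k < length ts"
  show "h \<ge> 1" using d[rule_format, of "[k]"] k by (auto simp: pos_cons_iff intro: pos.here)
  fix p assume "pos (ts ! k) p"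
  thus "length p \<le> h - 1" using d[rule_format, of "k # p"] k by (auto simp: pos_cons_iff)
qed

lemma depth_subtree: "depth_le T h \<Longrightarrow> pos T p \<Longrightarrow> depth_le (subtree T p) (h - length p)"
  unfolding depth_le_def using pos_append by fastforce

lemma lt2: "k < Suc (Suc 0) \<longleftrightarrow> k = 0 \<or> k = Suc 0" by auto

section \<open>Good trees\<close>

inductive good :: "stree \<Rightarrow> bool" where
  leaf: "good (SNode {i} [])"
| one: "good a \<Longrightarrow> good (SNode (lab a) [a])"
| two: "good a \<Longrightarrow> good b \<Longrightarrow> lab a \<inter> lab b = {} \<Longrightarrow> good (SNode (lab a \<union> lab b) [a, b])"

lemma good_lab_subtree: "good T \<Longrightarrow> pos T p \<Longrightarrow> lab (subtree T p) \<subseteq> lab T"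
proof (induction arbitrary: p rule: good.induct)
  case (leaf i) thus ?case by (cases p) (auto simp: pos_cons_iff)
next
  case (one a) thus ?case by (cases p) (auto simp: pos_cons_iff)
next
  case (two a b)
  show ?case
  proof (cases p)
    case Nil thus ?thesis by simp
  next
    case (Cons k p')
    hence k: "k = 0 \<or> k = 1" "pos ([a,b]!k) p'" using two.prems by (auto simp: pos_cons_iff)
    thus ?thesis using two.IH Cons by (elim disjE) auto
  qed
qed

fun psi :: "nat \<Rightarrow> stree \<Rightarrow> nat \<times> nat \<Rightarrow> 'a::comm_ring_1 poly" where
  "psi w (SNode l [a, b]) v = (if fst v \<in> lab a then Phi w L (psi w a v) else Phi w R (psi w b v))"
| "psi w (SNode l [a]) v = psi w a v"
| "psi w (SNode l ts) v = monom 1 (snd v)"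

lemma good_leaf:
  assumes "good T" "i \<in> lab T"
  shows "(\<exists>!p. pos T p \<and> subtree T p = SNode {i} []) \<and>
         (\<forall>p. pos T p \<and> subtree T p = SNode {i} [] \<longrightarrow>
             foldr (Phi w) (signature T p) (monom 1 j) = (psi w T (i,j) :: 'a::comm_ring_1 poly))"
  using assms
proof (induction rule: good.induct)
  case (leaf i')
  hence "i = i'" by simp
  have *: "pos (SNode {i'} []) p \<Longrightarrow> p = []" for p by (cases p) (auto simp: pos_cons_iff)
  show ?case
  proof (intro conjI allI impI)
    show "\<exists>!p. pos (SNode {i'} []) p \<and> subtree (SNode {i'} []) p = SNode {i} []"
      using * \<open>i = i'\<close> by (intro ex1I[of _ "[]"]) (auto intro: pos.here)
    fix p assume "pos (SNode {i'} []) p \<and> subtree (SNode {i'} []) p = SNode {i} []"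
    hence "p = []" using * by blast
    thus "foldr (Phi w) (signature (SNode {i'} []) p) (monom 1 j) = (psi w (SNode {i'} []) (i, j) :: 'a poly)" by simp
  qed
next
  case (one a)
  have ne: "SNode (lab a) [a] \<noteq> SNode {i} []" by simp
  have iff: "pos (SNode (lab a) [a]) p \<and> subtree (SNode (lab a) [a]) p = SNode {i} [] \<longleftrightarrow>
      (\<exists>p'. p = 0 # p' \<and> pos a p' \<and> subtree a p' = SNode {i} [])" for p
    using ne by (cases p) (auto simp: pos_cons_iff)
  from one.IH one.prems obtain p0 where p0: "pos a p0 \<and> subtree a p0 = SNode {i} []" by auto
  show ?case
  proof (intro conjI allI impI)
    show "\<exists>!p. pos (SNode (lab a) [a]) p \<and> subtree (SNode (lab a) [a]) p = SNode {i} []"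
      using one.IH one.prems p0 unfolding iff by (intro ex1I[of _ "0 # p0"]) auto
    fix p assume "pos (SNode (lab a) [a]) p \<and> subtree (SNode (lab a) [a]) p = SNode {i} []"
    then obtain p' where pp: "p = 0 # p'" "pos a p' \<and> subtree a p' = SNode {i} []" unfolding iff by blast
    have all: "\<forall>p. pos a p \<and> subtree a p = SNode {i} [] \<longrightarrow> foldr (Phi w) (signature a p) (monom 1 j) = (psi w a (i,j) :: 'a poly)"
      using one.IH one.prems by simp
    show "foldr (Phi w) (signature (SNode (lab a) [a]) p) (monom 1 j) = (psi w (SNode (lab a) [a]) (i,j) :: 'a poly)"
      using all[rule_format, OF pp(2)] pp(1) by simp
  qed
next
  case (two a b)
  have ne: "SNode (lab a \<union> lab b) [a,b] \<noteq> SNode {i} []" by simp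
  have ia: "i \<in> lab a \<Longrightarrow> pos a p' \<Longrightarrow> subtree a p' = SNode {i} [] \<Longrightarrow> True" for p' by simp
  have lsub: "pos x p' \<Longrightarrow> subtree x p' = SNode {i} [] \<Longrightarrow> good x \<Longrightarrow> i \<in> lab x" for x p'
    using good_lab_subtree[of x p'] by auto
  have iff: "pos (SNode (lab a \<union> lab b) [a,b]) p \<and> subtree (SNode (lab a \<union> lab b) [a,b]) p = SNode {i} [] \<longleftrightarrow>
      (\<exists>p'. (p = 0 # p' \<and> pos a p' \<and> subtree a p' = SNode {i} []) \<or>
            (p = 1 # p' \<and> pos b p' \<and> subtree b p' = SNode {i} []))" for p
    using ne by (cases p) (auto simp: pos_cons_iff lt2)
  show ?case
  proof (cases "i \<in> lab a")
    case True
    hence nb: "i \<notin> lab b" using two.hyps(3) by auto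
    from two.IH(1) True obtain p0 where p0: "pos a p0 \<and> subtree a p0 = SNode {i} []" by auto
    have iff2: "pos (SNode (lab a \<union> lab b) [a,b]) p \<and> subtree (SNode (lab a \<union> lab b) [a,b]) p = SNode {i} [] \<longleftrightarrow>
      (\<exists>p'. p = 0 # p' \<and> pos a p' \<and> subtree a p' = SNode {i} [])" for p
      unfolding iff using lsub[of b] two.hyps(2) nb by blast
    show ?thesis
    proof (intro conjI allI impI)
      show "\<exists>!p. pos (SNode (lab a \<union> lab b) [a,b]) p \<and> subtree (SNode (lab a \<union> lab b) [a,b]) p = SNode {i} []"
        using two.IH(1) True p0 unfolding iff2 by (intro ex1I[of _ "0 # p0"]) auto
      fix p assume "pos (SNode (lab a \<union> lab b) [a,b]) p \<and> subtree (SNode (lab a \<union> lab b) [a,b]) p = SNode {i} []"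
      then obtain p' where pp: "p = 0 # p'" "pos a p' \<and> subtree a p' = SNode {i} []" unfolding iff2 by blast
      have all: "\<forall>p. pos a p \<and> subtree a p = SNode {i} [] \<longrightarrow> foldr (Phi w) (signature a p) (monom 1 j) = (psi w a (i,j) :: 'a poly)"
        using two.IH(1) True by simp
      show "foldr (Phi w) (signature (SNode (lab a \<union> lab b) [a,b]) p) (monom 1 j) = (psi w (SNode (lab a \<union> lab b) [a,b]) (i,j) :: 'a poly)"
        using all[rule_format, OF pp(2)] pp(1) True by simp
    qed
  next
    case False
    hence ib: "i \<in> lab b" using two.prems by simp
    from two.IH(2) ib obtain p0 where p0: "pos b p0 \<and> subtree b p0 = SNode {i} []" by auto
    have iff2: "pos (SNode (lab a \<union> lab b) [a,b]) p \<and> subtree (SNode (lab a \<union> lab b) [a,b]) p = SNode {i} [] \<longleftrightarrow>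
      (\<exists>p'. p = 1 # p' \<and> pos b p' \<and> subtree b p' = SNode {i} [])" for p
      unfolding iff using lsub[of a] two.hyps(1) False by blast
    show ?thesis
    proof (intro conjI allI impI)
      show "\<exists>!p. pos (SNode (lab a \<union> lab b) [a,b]) p \<and> subtree (SNode (lab a \<union> lab b) [a,b]) p = SNode {i} []"
        using two.IH(2) ib p0 unfolding iff2 by (intro ex1I[of _ "1 # p0"]) auto
      fix p assume "pos (SNode (lab a \<union> lab b) [a,b]) p \<and> subtree (SNode (lab a \<union> lab b) [a,b]) p = SNode {i} []"
      then obtain p' where pp: "p = 1 # p'" "pos b p' \<and> subtree b p' = SNode {i} []" unfolding iff2 by blast
      have all: "\<forall>p. pos b p \<and> subtree b p = SNode {i} [] \<longrightarrow> foldr (Phi w) (signature b p) (monom 1 j) = (psi w b (i,j) :: 'a poly)"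
        using two.IH(2) ib by simp
      show "foldr (Phi w) (signature (SNode (lab a \<union> lab b) [a,b]) p) (monom 1 j) = (psi w (SNode (lab a \<union> lab b) [a,b]) (i,j) :: 'a poly)"
        using all[rule_format, OF pp(2)] pp(1) False by simp
    qed
  qed
qed

lemma Psi_psi:
  assumes "good T" "fst v \<in> lab T"
  shows "Psi w T v = (psi w T v :: 'a::comm_ring_1 poly)"
proof -
  obtain i j where v: "v = (i,j)" by (cases v)
  have gl: "(\<exists>!p. pos T p \<and> subtree T p = SNode {i} []) \<and>
         (\<forall>p. pos T p \<and> subtree T p = SNode {i} [] \<longrightarrow>
             foldr (Phi w) (signature T p) (monom 1 j) = (psi w T (i,j) :: 'a poly))"
    using good_leaf[OF assms(1), of i w j] assms(2) v by simp
  have ex1: "\<exists>!p. pos T p \<and> subtree T p = SNode {i} []" using gl by (rule conjunct1)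
  have "pos T (leaf_pos T i) \<and> subtree T (leaf_pos T i) = SNode {i} []"
    unfolding leaf_pos_def by (rule theI'[OF ex1])
  hence "foldr (Phi w) (signature T (leaf_pos T i)) (monom 1 j) = (psi w T (i,j) :: 'a poly)"
    using gl by blast
  thus ?thesis using v unfolding Psi_def by simp
qed

lemma degree_psi:
  shows "w \<ge> 1 \<Longrightarrow> depth_le T h \<Longrightarrow> degree (psi w T v :: 'a::idom poly) \<le> snd v * w ^ h"
proof (induction w T v arbitrary: h rule: psi.induct)
  case (1 w l a b v)
  note assms = 1(3)
  have da: "h \<ge> 1 \<and> depth_le a (h - 1)" using depth_child[OF 1(4), of 0] by simp
  have db: "depth_le b (h - 1)" using depth_child[OF 1(4), of 1] by simp
  have dw1: "degree (monom 1 w :: 'a poly) = w" by (simp add: degree_monom_eq)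
  have dw2: "degree (monom 1 w + monom 1 (w-1) :: 'a poly) = w"
  proof (cases "w = 1")
    case True thus ?thesis by (simp add: monom_0 monom_Suc)
  next
    case False
    have "w - 1 < w" using assms by linarith
    thus ?thesis using assms False by (subst degree_add_eq_left) (auto simp: degree_monom_eq)
  qed
  have hh: "w ^ (h - 1) * w = w ^ h" using da by (cases h) (auto simp: mult.commute)
  show ?case
  proof (cases "fst v \<in> lab a")
    case True
    have "degree (psi w (SNode l [a, b]) v :: 'a poly) = degree (psi w a v :: 'a poly) * w"
      using True by (simp add: Phi_def degree_pcompose dw1)
    also have "\<dots> \<le> snd v * w ^ (h - 1) * w" using 1(1)[OF True assms] da by (intro mult_right_mono) auto
    finally show ?thesis using hh by (simp add: mult.assoc)
  next
    case False
    have "degree (psi w (SNode l [a, b]) v :: 'a poly) = degree (psi w b v :: 'a poly) * w"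
      using False by (simp add: Phi_def degree_pcompose dw2[simplified])
    also have "\<dots> \<le> snd v * w ^ (h - 1) * w" using 1(2)[OF False assms] db by (intro mult_right_mono) auto
    finally show ?thesis using hh by (simp add: mult.assoc)
  qed
next
  case (2 w l a v)
  note assms = 2(2)
  have da: "h \<ge> 1 \<and> depth_le a (h - 1)" using depth_child[OF 2(3), of 0] by simp
  have "degree (psi w a v :: 'a poly) \<le> snd v * w ^ (h - 1)" using 2(1) da assms by simp
  also have "\<dots> \<le> snd v * w ^ h" using assms by (intro mult_left_mono power_increasing) auto
  finally show ?case by simp
next
  case ("3_1" w l v) thus ?case by (simp add: degree_monom_eq)
next
  case ("3_2" w l a b c vs v) thus ?case by (simp add: degree_monom_eq)
qed


lemma degree_msubst:
  assumes "\<And>m v. m \<in> Poly_Mapping.keys p \<Longrightarrow> v \<in> Poly_Mapping.keys m \<Longrightarrow> degree (\<Psi> v) \<le> D"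
    and "\<And>m. m \<in> Poly_Mapping.keys p \<Longrightarrow> tdeg m \<le> s"
  shows "degree (msubst \<Psi> p) \<le> s * D"
  unfolding msubst_def
proof (rule degree_sum_le)
  fix m assume m: "m \<in> Poly_Mapping.keys p"
  have "degree (\<Prod>v\<in>Poly_Mapping.keys m. \<Psi> v ^ Poly_Mapping.lookup m v)
        \<le> (\<Sum>v\<in>Poly_Mapping.keys m. degree (\<Psi> v ^ Poly_Mapping.lookup m v))"
    using degree_prod_sum_le[of "Poly_Mapping.keys m" "\<lambda>v. \<Psi> v ^ Poly_Mapping.lookup m v"] by (simp add: o_def)
  also have "\<dots> \<le> (\<Sum>v\<in>Poly_Mapping.keys m. D * Poly_Mapping.lookup m v)"
  proof (rule sum_mono)
    fix v assume "v \<in> Poly_Mapping.keys m"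
    have "degree (\<Psi> v ^ Poly_Mapping.lookup m v) \<le> degree (\<Psi> v) * Poly_Mapping.lookup m v"
      by (rule degree_power_le)
    also have "\<dots> \<le> D * Poly_Mapping.lookup m v" using assms(1)[OF m \<open>v \<in> _\<close>] by simp
    finally show "degree (\<Psi> v ^ Poly_Mapping.lookup m v) \<le> D * Poly_Mapping.lookup m v" .
  qed
  also have "\<dots> = D * tdeg m" by (simp add: tdeg_def sum_distrib_left)
  also have "\<dots> \<le> s * D" using assms(2)[OF m] by (simp add: mult.commute)
  finally show "degree (smult (Poly_Mapping.lookup p m) (\<Prod>v\<in>Poly_Mapping.keys m. \<Psi> v ^ Poly_Mapping.lookup m v)) \<le> s * D"
    using degree_smult_le order_trans by blast
qed simp

lemma msubst_mconst_mult: "msubst \<Psi> (mconst c * p) = smult c (msubst \<Psi> p)"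
  by (simp add: msubst_mult)

locale circ2 = circ C N S d n rt
  for C :: "nat \<Rightarrow> 'a::field gate" and N S d n rt +
  fixes w r :: nat and T :: stree
  assumes rt_lt: "rt < N"
    and upt: "\<forall>t. is_ptree C rt t \<longrightarrow> shape S t = T"
    and width: "preimage_width C rt T = w"
    and w_pos: "w \<ge> 1"
    and depth: "depth_le T r"
    and char: "CHAR('a) = 0 \<or> CHAR('a) > d * n * w ^ r"
    and ex_pt: "\<exists>t. is_ptree C rt t"
begin

abbreviation Pre where "Pre p \<equiv> preimage C rt p"

definition spanP :: "nat set \<Rightarrow> 'a mpoly set" where
  "spanP G = {h. \<exists>c. h = (\<Sum>g\<in>G. mconst (c g) * f g)}"

lemma span_zero: "0 \<in> spanP G"
  unfolding spanP_def by (rule CollectI, rule exI[of _ "\<lambda>_. 0"]) simp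

lemma span_add: "x \<in> spanP G \<Longrightarrow> y \<in> spanP G \<Longrightarrow> x + y \<in> spanP G"
  unfolding spanP_def
proof clarify
  fix c c' show "\<exists>c''. (\<Sum>g\<in>G. mconst (c g) * f g) + (\<Sum>g\<in>G. mconst (c' g) * f g) = (\<Sum>g\<in>G. mconst (c'' g) * f g)"
    by (rule exI[of _ "\<lambda>g. c g + c' g"]) (simp add: mconst_add sum.distrib algebra_simps)
qed

lemma span_scal: "x \<in> spanP G \<Longrightarrow> mconst a * x \<in> spanP G"
  unfolding spanP_def
proof clarify
  fix c show "\<exists>c''. mconst a * (\<Sum>g\<in>G. mconst (c g) * f g) = (\<Sum>g\<in>G. mconst (c'' g) * f g)"
    by (rule exI[of _ "\<lambda>g. a * c g"]) (simp add: mconst_mult sum_distrib_left mult.assoc)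
qed

lemma span_gen: "finite G \<Longrightarrow> g \<in> G \<Longrightarrow> f g \<in> spanP G"
  unfolding spanP_def
proof (rule CollectI, rule exI[of _ "\<lambda>x. if x = g then 1 else 0"])
  assume "finite G" "g \<in> G"
  show "f g = (\<Sum>x\<in>G. mconst (if x = g then 1 else 0) * f x)"
  proof -
    have "(\<Sum>x\<in>G. mconst (if x = g then 1 else 0) * f x) = (\<Sum>x\<in>G. if x = g then f x else 0)"
      by (rule sum.cong) auto
    thus ?thesis using \<open>finite G\<close> \<open>g \<in> G\<close> by simp
  qed
qed

lemma span_sum: "(\<And>i. i \<in> I \<Longrightarrow> h i \<in> spanP G) \<Longrightarrow> sum h I \<in> spanP G"
  by (induction I rule: infinite_finite_induct) (auto intro: span_zero span_add)

lemma span_sum_list: "(\<And>x. x \<in> set xs \<Longrightarrow> h x \<in> spanP G) \<Longrightarrow> sum_list (map h xs) \<in> spanP G"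
  by (induction xs) (auto intro: span_zero span_add)

lemma msubst_span: "msubst \<Psi> (\<Sum>g\<in>G. mconst (c g) * f g) = (\<Sum>g\<in>G. smult (c g) (msubst \<Psi> (f g)))"
  by (simp add: msubst_sum msubst_mconst_mult)

lemma ptree_lt: "is_ptree C g t \<Longrightarrow> g < N \<Longrightarrow> pos (shape S t) p \<Longrightarrow> pgate t p \<le> g"
proof (induction p arbitrary: g t)
  case Nil thus ?case using ptree_root[OF Nil(1)] by (cases t) simp
next
  case (Cons k p)
  from Cons.prems(1) show ?case
  proof (cases rule: is_ptree.cases)
    case (inp i j) thus ?thesis using Cons.prems(3) by (simp add: pos_cons_iff)
  next
    case (add cs c k' t1)
    hence "k = 0" "pos (shape S t1) p" using Cons.prems(3) by (auto simp: pos_cons_iff)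
    moreover have "k' < g" using Add_lt[OF Cons.prems(2) add(2,3)] .
    moreover have "pgate t1 p \<le> k'" using Cons.IH[OF add(4)] \<open>k' < g\<close> Cons.prems(2) calculation by simp
    ultimately show ?thesis using add(1) by simp
  next
    case (mul a b ta tb)
    hence kk: "k < 2" "pos ([shape S ta, shape S tb] ! k) p" using Cons.prems(3) by (auto simp: pos_cons_iff)
    have "[shape S ta, shape S tb] ! k = shape S ([ta,tb] ! k)" using kk(1) by (cases k) auto
    hence k: "k = 0 \<or> k = 1" "pos (shape S ([ta,tb] ! k)) p" using kk by auto
    have lt: "a < g" "b < g" using Mul_lt[OF Cons.prems(2) mul(2)] by auto
    from k show ?thesis
    proof (elim disjE)
      assume k0: "k = 0"
      have "pos (shape S ta) p" using k(2) k0 by simp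
      hence "pgate ta p \<le> a" using Cons.IH[OF mul(3)] lt Cons.prems(2) by simp
      thus ?thesis using mul(1) k0 lt by simp
    next
      assume k1: "k = 1"
      have "pos (shape S tb) p" using k(2) k1 by simp
      hence "pgate tb p \<le> b" using Cons.IH[OF mul(4)] lt Cons.prems(2) by simp
      thus ?thesis using mul(1) k1 lt by simp
    qed
  qed
qed

lemma good_shape: "is_ptree C g t \<Longrightarrow> g < N \<Longrightarrow> good (shape S t) \<and> lab (shape S t) = S g"
proof (induction rule: is_ptree.induct)
  case (inp g i j)
  thus ?case using sml_Inp[OF inp(2,1)] by (auto intro: good.leaf)
next
  case (add g cs c k t)
  have "k < g" using Add_lt[OF add(5,1,2)] .
  hence "good (shape S t) \<and> lab (shape S t) = S k" using add by simp
  moreover have "S k = S g" using sml_Add[OF add(5,1,2)] .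
  ultimately show ?case using good.one[of "shape S t"] by simp
next
  case (mul g a b ta tb)
  have lt: "a < g" "b < g" using Mul_lt[OF mul(6,1)] by auto
  have "good (shape S ta) \<and> lab (shape S ta) = S a" "good (shape S tb) \<and> lab (shape S tb) = S b"
    using mul lt by auto
  moreover have "S a \<inter> S b = {} \<and> S g = S a \<union> S b" using sml_Mul[OF mul(6,1)] .
  ultimately show ?case using good.two[of "shape S ta" "shape S tb"] by simp
qed

end


context circ2 begin

lemma T_good: "good T \<and> lab T = S rt"
  using ex_pt upt good_shape rt_lt by blast

lemma Pre_elem:
  assumes "pos T p" "g \<in> Pre p"
  obtains t where "is_ptree C rt t" "pgate t p = g" "is_ptree C g (psub t p)"
    "shape S (psub t p) = subtree T p" "g < N" "psub t p = PT g (case psub t p of PT _ ts \<Rightarrow> ts)"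
proof -
  obtain t where t: "is_ptree C rt t" "pgate t p = g" using assms(2) unfolding preimage_def by blast
  have sh: "shape S t = T" using upt t(1) by blast
  hence ps: "pos (shape S t) p" using assms(1) by simp
  have "is_ptree C g (psub t p)" using ptree_psub[OF t(1) ps] t(2) by simp
  moreover have "shape S (psub t p) = subtree T p" using subtree_shape[OF ps] sh by simp
  moreover have "g < N" using ptree_lt[OF t(1) rt_lt ps] t(2) rt_lt by simp
  moreover have "psub t p = PT g (case psub t p of PT _ ts \<Rightarrow> ts)"
    using ptree_root[OF \<open>is_ptree C g (psub t p)\<close>] by (cases "psub t p") auto
  ultimately show ?thesis using that t by blast
qed

lemma Pre_sub: "pos T p \<Longrightarrow> Pre p \<subseteq> {..rt}"
proof
  fix g assume "pos T p" "g \<in> Pre p"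
  then obtain t where t: "is_ptree C rt t" "pgate t p = g" unfolding preimage_def by blast
  have "pos (shape S t) p" using upt t(1) \<open>pos T p\<close> by simp
  thus "g \<in> {..rt}" using ptree_lt[OF t(1) rt_lt \<open>pos (shape S t) p\<close>] t(2) by simp
qed

lemma Pre_fin: assumes "pos T p" shows "finite (Pre p)" "card (Pre p) \<le> w"
proof -
  show fin: "finite (Pre p)" using Pre_sub[OF assms] finite_subset by blast
  have "{card (Pre q) | q. pos T q} \<subseteq> {..Suc rt}"
  proof
    fix x assume "x \<in> {card (Pre q) | q. pos T q}"
    then obtain q where "x = card (Pre q)" "pos T q" by blast
    thus "x \<in> {..Suc rt}" using card_mono[OF _ Pre_sub[of q]] by fastforce
  qed
  hence "finite {card (Pre q) | q. pos T q}" using finite_subset by blast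
  hence "card (Pre p) \<le> Max {card (Pre q) | q. pos T q}" using assms by (intro Max_ge) auto
  thus "card (Pre p) \<le> w" using width unfolding preimage_width_def by simp
qed

lemma child_pos:
  assumes "pos T p" "subtree T p = SNode l ts" "k < length ts"
  shows "pos T (p @ [k])" "subtree T (p @ [k]) = ts ! k"
proof -
  have "pos (subtree T p) [k]" using assms by (auto intro: pos.child pos.here)
  thus "pos T (p @ [k])" "subtree T (p @ [k]) = ts ! k" using pos_append[OF assms(1)] assms(2) by auto
qed

definition Claim :: "nat list \<Rightarrow> bool" where
  "Claim p \<longleftrightarrow> (\<forall>h\<in>spanP (Pre p). h \<noteq> 0 \<longrightarrow> msubst (psi w (subtree T p)) h \<noteq> 0)"

lemma lookup_mvar: "Poly_Mapping.lookup (mvar v) M = (if Poly_Mapping.single v 1 = M then 1 else 0)"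
  by (simp add: mvar_def lookup_single when_def)

lemma claim_leaf:
  assumes p: "pos T p" and st: "subtree T p = SNode l []"
  shows "Claim p"
  unfolding Claim_def
proof (intro ballI impI)
  fix h assume h: "h \<in> spanP (Pre p)" "h \<noteq> 0"
  define ii where "ii g = (case C g of Inp i j \<Rightarrow> i | _ \<Rightarrow> 0)" for g
  define jj where "jj g = (case C g of Inp i j \<Rightarrow> j | _ \<Rightarrow> 0)" for g
  have G: "C g = Inp (ii g) (jj g) \<and> l = {ii g} \<and> f g = mvar (ii g, jj g)" if g: "g \<in> Pre p" for g
  proof -
    obtain t where t: "is_ptree C g (psub t p)" "shape S (psub t p) = subtree T p" "g < N"
      "psub t p = PT g (case psub t p of PT _ ts \<Rightarrow> ts)"
      using Pre_elem[OF p g] by metis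
    have "psub t p = PT g []" using t(2,4) st by (cases "psub t p") auto
    hence "is_ptree C g (PT g [])" using t(1) by simp
    then obtain i j where Cg: "C g = Inp i j" by (cases rule: is_ptree.cases) auto
    have "S g = {i}" using sml_Inp[OF t(3) Cg] by simp
    moreover have "S g = l" using t(2) st \<open>psub t p = PT g []\<close> by simp
    ultimately show ?thesis using Cg f_Inp[OF t(3) Cg] unfolding ii_def jj_def by simp
  qed
  obtain c where hc: "h = (\<Sum>g\<in>Pre p. mconst (c g) * f g)" using h(1) unfolding spanP_def by blast
  have fin: "finite (Pre p)" using Pre_fin[OF p] by simp
  obtain M where M: "Poly_Mapping.lookup h M \<noteq> 0" using h(2) poly_mapping_eqI[of h 0] by auto
  have lh: "Poly_Mapping.lookup h M' = (\<Sum>g\<in>Pre p. c g * (if Poly_Mapping.single (ii g, jj g) 1 = M' then 1 else 0))" for M'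
    unfolding hc by (simp add: lookup_sum lookup_mconst_mult G lookup_mvar cong: sum.cong)
  have "\<exists>g0\<in>Pre p. Poly_Mapping.single (ii g0, jj g0) 1 = M"
  proof (rule ccontr)
    assume "\<not> ?thesis"
    hence "Poly_Mapping.lookup h M = 0" unfolding lh by (intro sum.neutral) auto
    thus False using M by simp
  qed
  then obtain g0 where g0: "g0 \<in> Pre p" "Poly_Mapping.single (ii g0, jj g0) 1 = M" by blast
  have iig: "ii g = ii g0" if "g \<in> Pre p" for g using G[OF that] G[OF g0(1)] by simp
  have sing: "Poly_Mapping.single (ii g, jj g) (1::nat) = Poly_Mapping.single (ii g0, jj g0) 1 \<longleftrightarrow> jj g = jj g0"
    if "g \<in> Pre p" for g
  proof
    assume "Poly_Mapping.single (ii g, jj g) (1::nat) = Poly_Mapping.single (ii g0, jj g0) 1"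
    hence "Poly_Mapping.lookup (Poly_Mapping.single (ii g, jj g) (1::nat)) (ii g0, jj g0) = 1" by simp
    thus "jj g = jj g0" by (simp add: lookup_single when_def split: if_splits)
  qed (use iig[OF that] in simp)
  have "psi w (subtree T p) v = (monom 1 (snd v) :: 'a poly)" for v unfolding st by simp
  hence "msubst (psi w (subtree T p)) h = (\<Sum>g\<in>Pre p. smult (c g) (monom 1 (jj g)))"
    unfolding hc msubst_span by (intro sum.cong) (simp_all add: G)
  hence "coeff (msubst (psi w (subtree T p)) h) (jj g0) = (\<Sum>g\<in>Pre p. c g * (if jj g = jj g0 then 1 else 0))"
    by (simp add: coeff_sum if_distrib eq_commute cong: if_cong)
  also have "\<dots> = Poly_Mapping.lookup h M" unfolding lh g0(2)[symmetric]
    by (intro sum.cong) (simp_all add: sing[simplified])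
  finally show "msubst (psi w (subtree T p)) h \<noteq> 0" using M by auto
qed

lemma claim_add:
  assumes p: "pos T p" and st: "subtree T p = SNode l [T0]" and IH: "Claim (p @ [0])"
  shows "Claim p"
  unfolding Claim_def
proof (intro ballI impI)
  have p0: "pos T (p @ [0])" "subtree T (p @ [0]) = T0" using child_pos[OF p st, of 0] by auto
  have fin0: "finite (Pre (p @ [0]))" using Pre_fin[OF p0(1)] by simp
  have fg: "f g \<in> spanP (Pre (p @ [0]))" if g: "g \<in> Pre p" for g
  proof -
    obtain t where t: "is_ptree C rt t" "pgate t p = g" "is_ptree C g (psub t p)"
      "shape S (psub t p) = subtree T p" "g < N" "psub t p = PT g (case psub t p of PT _ ts \<Rightarrow> ts)"
      using Pre_elem[OF p g] by metis
    obtain t1 where "psub t p = PT g [t1]" using t(4,6) st by (cases "psub t p") auto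
    hence "is_ptree C g (PT g [t1])" using t(3) by simp
    then obtain cs c1 k1 where Cg: "C g = Add cs" by (cases rule: is_ptree.cases) auto
    have sh: "pos (shape S t) p" using upt t(1) p by simp
    show ?thesis unfolding f_Add[OF t(5) Cg]
    proof (rule span_sum_list)
      fix x assume x: "x \<in> set cs"
      obtain c k where ck: "x = (c,k)" by (cases x)
      show "(case x of (c, k) \<Rightarrow> mconst c * f k) \<in> spanP (Pre (p @ [0]))"
      proof (cases "\<exists>tk. is_ptree C k tk")
        case True
        then obtain tk where tk: "is_ptree C k tk" by blast
        have pt: "is_ptree C g (PT g [tk])" using is_ptree.add[OF Cg x[unfolded ck] tk] .
        have rep: "is_ptree C rt (prepl t p (PT g [tk])) \<and> psub (prepl t p (PT g [tk])) p = PT g [tk]"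
          using ptree_prepl[OF t(1) sh] pt t(2) by simp
        have "pgate (prepl t p (PT g [tk])) (p @ [0]) = k"
          using rep ptree_root[OF tk] by (simp add: pgate_append) (simp add: pgate_psub)
        hence "k \<in> Pre (p @ [0])" using rep unfolding preimage_def by blast
        thus ?thesis using ck fin0 by (simp add: span_scal span_gen)
      next
        case False
        have "k < g" using Add_lt[OF t(5) Cg x[unfolded ck]] .
        hence "f k = 0" using no_ptree_zero False t(5) by simp
        thus ?thesis using ck span_zero by simp
      qed
    qed
  qed
  fix h assume h: "h \<in> spanP (Pre p)" "h \<noteq> 0"
  obtain c where hc: "h = (\<Sum>g\<in>Pre p. mconst (c g) * f g)" using h(1) unfolding spanP_def by blast
  have "h \<in> spanP (Pre (p @ [0]))" unfolding hc by (intro span_sum span_scal fg)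
  hence "msubst (psi w T0) h \<noteq> 0" using IH h(2) p0(2) unfolding Claim_def by simp
  moreover have "psi w (SNode l [T0]) = (psi w T0 :: nat \<times> nat \<Rightarrow> 'a poly)" by (rule ext) simp
  ultimately show "msubst (psi w (subtree T p)) h \<noteq> 0" using st by simp
qed

end


context circ2 begin

lemma Vars_disj: "A \<inter> B = {} \<Longrightarrow> Vars A \<inter> Vars B = {}"
  by (auto simp: Vars_def)

lemma msubst_pcomp: "msubst (\<lambda>v. pcompose (\<Psi> v) q) p = pcompose (msubst \<Psi> p) q"
  by (rule msubst_hom) (simp_all add: pcompose_add pcompose_mult pcompose_smult pcompose_1)

lemma claim_mul:
  assumes p: "pos T p" and st: "subtree T p = SNode l [Ta, Tb]"
    and IHA: "Claim (p @ [0])" and IHB: "Claim (p @ [1])"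
  shows "Claim p"
  unfolding Claim_def
proof (intro ballI impI)
  have pa: "pos T (p @ [0])" "subtree T (p @ [0]) = Ta" using child_pos[OF p st, of 0] by auto
  have pb: "pos T (p @ [1])" "subtree T (p @ [1]) = Tb" using child_pos[OF p st, of 1] by auto
  define G where "G = Pre p"
  define GA where "GA = Pre (p @ [0])"
  define GB where "GB = Pre (p @ [1])"
  have finG: "finite G" "card G \<le> w" using Pre_fin[OF p] unfolding G_def by auto
  have finA: "finite GA" using Pre_fin[OF pa(1)] unfolding GA_def by auto
  have finB: "finite GB" using Pre_fin[OF pb(1)] unfolding GB_def by auto
  define aa where "aa g = (case C g of Mul a b \<Rightarrow> a | _ \<Rightarrow> 0)" for g
  define bb where "bb g = (case C g of Mul a b \<Rightarrow> b | _ \<Rightarrow> 0)" for g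
  have Gf: "aa g \<in> GA \<and> bb g \<in> GB \<and> S (aa g) = lab Ta \<and> S (bb g) = lab Tb \<and>
      aa g < N \<and> bb g < N \<and> f g = f (aa g) * f (bb g) \<and> lab Ta \<inter> lab Tb = {}" if g: "g \<in> G" for g
  proof -
    obtain t where t: "is_ptree C rt t" "pgate t p = g" "is_ptree C g (psub t p)"
      "shape S (psub t p) = subtree T p" "g < N" "psub t p = PT g (case psub t p of PT _ ts \<Rightarrow> ts)"
      using Pre_elem[OF p g[unfolded G_def]] by metis
    obtain ta tb where ps: "psub t p = PT g [ta, tb]" using t(4,6) st by (cases "psub t p") auto
    have shp: "shape S ta = Ta" "shape S tb = Tb" "S g = l" using t(4) ps st by auto
    have "is_ptree C g (PT g [ta, tb])" using t(3) ps by simp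
    then obtain a b where Cg: "C g = Mul a b" and pa': "is_ptree C a ta" and pb': "is_ptree C b tb"
      by (cases rule: is_ptree.cases) auto
    have ab: "aa g = a" "bb g = b" unfolding aa_def bb_def Cg by auto
    have lt: "a < N" "b < N" using Mul_lt[OF t(5) Cg] t(5) by auto
    have "pgate t (p @ [0]) = a" using ps ptree_root[OF pa'] by (simp add: pgate_append) (simp add: pgate_psub)
    hence "a \<in> GA" using t(1) unfolding GA_def preimage_def by blast
    moreover have "pgate t (p @ [1]) = b" using ps ptree_root[OF pb'] by (simp add: pgate_append) (simp add: pgate_psub)
    hence "b \<in> GB" using t(1) unfolding GB_def preimage_def by blast
    moreover have "S a = lab Ta" "S b = lab Tb" using good_shape[OF pa' lt(1)] good_shape[OF pb' lt(2)] shp by auto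
    moreover have "S a \<inter> S b = {}" using sml_Mul[OF t(5) Cg] by simp
    ultimately show ?thesis using ab lt f_Mul[OF t(5) Cg] by auto
  qed
  let ?u = "monom 1 w :: 'a poly" and ?v = "monom 1 w + monom 1 (w-1) :: 'a poly"
  define X where "X g = msubst (psi w Ta) (f (aa g))" for g
  define Y where "Y g = msubst (psi w Tb) (f (bb g))" for g
  have suppA: "Poly_Mapping.keys m \<subseteq> Vars (lab Ta)" if "g \<in> G" "m \<in> Poly_Mapping.keys (f (aa g))" for g m
    using support[of "aa g" m] Gf[OF that(1)] that(2) by auto
  have suppB: "Poly_Mapping.keys m \<subseteq> Vars (lab Tb)" if "g \<in> G" "m \<in> Poly_Mapping.keys (f (bb g))" for g m
    using support[of "bb g" m] Gf[OF that(1)] that(2) by auto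
  have psiA: "msubst (psi w (subtree T p)) (f (aa g)) = pcompose (X g) ?u" if g: "g \<in> G" for g
  proof -
    have "msubst (psi w (subtree T p)) (f (aa g)) = msubst (\<lambda>v. pcompose (psi w Ta v) ?u) (f (aa g))"
    proof (rule msubst_cong)
      fix m v assume "m \<in> Poly_Mapping.keys (f (aa g))" "v \<in> Poly_Mapping.keys m"
      hence "fst v \<in> lab Ta" using suppA[OF g] by (auto simp: Vars_def)
      thus "psi w (subtree T p) v = pcompose (psi w Ta v) ?u" unfolding st by (simp add: Phi_def)
    qed
    thus ?thesis unfolding X_def msubst_pcomp .
  qed
  have psiB: "msubst (psi w (subtree T p)) (f (bb g)) = pcompose (Y g) ?v" if g: "g \<in> G" for g
  proof -
    have "msubst (psi w (subtree T p)) (f (bb g)) = msubst (\<lambda>v. pcompose (psi w Tb v) ?v) (f (bb g))"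
    proof (rule msubst_cong)
      fix m v assume "m \<in> Poly_Mapping.keys (f (bb g))" "v \<in> Poly_Mapping.keys m"
      hence "fst v \<in> lab Tb" using suppB[OF g] by (auto simp: Vars_def)
      hence "fst v \<notin> lab Ta" using Gf[OF g] by auto
      thus "psi w (subtree T p) v = pcompose (psi w Tb v) ?v" unfolding st by (simp add: Phi_def)
    qed
    thus ?thesis unfolding Y_def msubst_pcomp .
  qed
  have degY: "CHAR('a) = 0 \<or> degree (Y g) < CHAR('a)" if g: "g \<in> G" for g
  proof -
    have dB: "depth_le Tb (r - length (p @ [1]))" using depth_subtree[OF depth pb(1)] pb(2) by simp
    have "degree (Y g) \<le> card (S (bb g)) * (n * w ^ r)" unfolding Y_def
    proof (rule degree_msubst)
      fix m v assume m: "m \<in> Poly_Mapping.keys (f (bb g))" and v: "v \<in> Poly_Mapping.keys m"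
      have "v \<in> Vars (S (bb g))" using support[of "bb g" m] Gf[OF g] m v by auto
      hence sv: "snd v \<le> n" by (auto simp: Vars_def)
      have "degree (psi w Tb v :: 'a poly) \<le> snd v * w ^ (r - length (p @ [1]))"
        by (rule degree_psi[OF w_pos dB])
      also have "\<dots> \<le> n * w ^ r" using sv w_pos by (intro mult_mono power_increasing) auto
      finally show "degree (psi w Tb v :: 'a poly) \<le> n * w ^ r" .
    next
      fix m assume m: "m \<in> Poly_Mapping.keys (f (bb g))"
      show "tdeg m \<le> card (S (bb g))" using support[of "bb g" m] Gf[OF g] m by auto
    qed
    also have "\<dots> \<le> d * (n * w ^ r)"
    proof -
      have "card (S (bb g)) \<le> card {1..d}" using sml_S[of "bb g"] Gf[OF g] by (intro card_mono) auto
      thus ?thesis by (intro mult_right_mono) auto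
    qed
    finally show ?thesis using char by (auto simp: mult.assoc)
  qed
  fix h assume h: "h \<in> spanP (Pre p)" "h \<noteq> 0"
  obtain c where hc: "h = (\<Sum>g\<in>G. mconst (c g) * f g)" using h(1) unfolding spanP_def G_def by blast
  show "msubst (psi w (subtree T p)) h \<noteq> 0"
  proof
    assume img0: "msubst (psi w (subtree T p)) h = 0"
    define P where "P = (\<Sum>g\<in>G. [:smult (c g) (X g):] * map_poly (\<lambda>x. [:x:]) (Y g))"
    have "ev2 ?u ?v P = (\<Sum>g\<in>G. smult (c g) (pcompose (X g) ?u * pcompose (Y g) ?v))"
      unfolding P_def ev2_sum by (intro sum.cong refl) (simp only: ev2_mult ev2_const ev2_lift pcompose_smult mult_smult_left)
    also have "\<dots> = msubst (psi w (subtree T p)) h"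
      unfolding hc msubst_span by (intro sum.cong) (simp_all add: Gf msubst_mult psiA psiB)
    finally have "ev2 ?u ?v P = 0" using img0 by simp
    hence evP: "ev2 ?u ?v P = 0" .
    have P0: "P = 0" unfolding P_def
    proof (rule BL[OF w_pos finG(1) finG(2)])
      show "\<And>k. k \<in> G \<Longrightarrow> CHAR('a) = 0 \<or> degree (Y k) < CHAR('a)" by (rule degY)
      show "ev2 ?u ?v (\<Sum>g\<in>G. [:smult (c g) (X g):] * map_poly (\<lambda>x. [:x:]) (Y g)) = 0"
        using evP unfolding P_def .
    qed
    have coeffP: "coeff P k = (\<Sum>g\<in>G. smult (c g * coeff (Y g) k) (X g))" for k
      unfolding P_def by (simp add: coeff_sum coeff_map_poly mult.commute)
    define hA where "hA k = (\<Sum>g\<in>G. mconst (c g * coeff (Y g) k) * f (aa g))" for k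
    have hA0: "hA k = 0" for k
    proof (rule ccontr)
      assume "hA k \<noteq> 0"
      moreover have "hA k \<in> spanP GA" unfolding hA_def
        using Gf finA by (intro span_sum span_scal span_gen) auto
      ultimately have "msubst (psi w Ta) (hA k) \<noteq> 0" using IHA pa unfolding Claim_def GA_def by simp
      moreover have "msubst (psi w Ta) (hA k) = coeff P k"
        unfolding hA_def coeffP by (simp add: msubst_sum msubst_mconst_mult X_def)
      ultimately show False using P0 by simp
    qed
    define hB where "hB m = (\<Sum>g\<in>G. mconst (c g * Poly_Mapping.lookup (f (aa g)) m) * f (bb g))" for m
    have hB0: "hB m = 0" for m
    proof (rule ccontr)
      assume "hB m \<noteq> 0"
      moreover have "hB m \<in> spanP GB" unfolding hB_def
        using Gf finB by (intro span_sum span_scal span_gen) auto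
      ultimately have "msubst (psi w Tb) (hB m) \<noteq> 0" using IHB pb unfolding Claim_def GB_def by simp
      moreover have "msubst (psi w Tb) (hB m) = 0"
      proof (rule poly_eqI)
        fix k
        have "coeff (msubst (psi w Tb) (hB m)) k = (\<Sum>g\<in>G. c g * Poly_Mapping.lookup (f (aa g)) m * coeff (Y g) k)"
          unfolding hB_def by (simp add: msubst_sum msubst_mconst_mult Y_def coeff_sum)
        also have "\<dots> = Poly_Mapping.lookup (hA k) m"
          unfolding hA_def lookup_sum lookup_mconst_mult by (simp add: mult_ac)
        finally show "coeff (msubst (psi w Tb) (hB m)) k = coeff 0 k" using hA0 by simp
      qed
      ultimately show False by simp
    qed
    have disj: "Vars (lab Ta) \<inter> Vars (lab Tb) = {}"
    proof -
      obtain g where "g \<in> G" using h(2) hc by (cases "G = {}") auto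
      hence "lab Ta \<inter> lab Tb = {}" using Gf by blast
      thus ?thesis by (rule Vars_disj)
    qed
    have "h = 0"
    proof (rule poly_mapping_eqI)
      fix M
      have lh: "Poly_Mapping.lookup h M = (\<Sum>g\<in>G. c g * Poly_Mapping.lookup (f (aa g) * f (bb g)) M)"
        unfolding hc by (simp add: lookup_sum lookup_mconst_mult Gf cong: sum.cong)
      show "Poly_Mapping.lookup h M = Poly_Mapping.lookup 0 M"
      proof (cases "\<exists>m1 m2. M = m1 + m2 \<and> Poly_Mapping.keys m1 \<subseteq> Vars (lab Ta) \<and> Poly_Mapping.keys m2 \<subseteq> Vars (lab Tb)")
        case True
        then obtain m1 m2 where M: "M = m1 + m2" "Poly_Mapping.keys m1 \<subseteq> Vars (lab Ta)" "Poly_Mapping.keys m2 \<subseteq> Vars (lab Tb)"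
          by blast
        have "Poly_Mapping.lookup h M = (\<Sum>g\<in>G. c g * (Poly_Mapping.lookup (f (aa g)) m1 * Poly_Mapping.lookup (f (bb g)) m2))"
          unfolding lh
        proof (rule sum.cong[OF refl])
          fix g assume g: "g \<in> G"
          show "c g * Poly_Mapping.lookup (f (aa g) * f (bb g)) M = c g * (Poly_Mapping.lookup (f (aa g)) m1 * Poly_Mapping.lookup (f (bb g)) m2)"
            using lookup_split_mult[where p="f (aa g)" and q="f (bb g)" and VA="Vars (lab Ta)" and VB="Vars (lab Tb)", OF suppA[OF g] suppB[OF g] disj M(2,3)] M(1) by simp
        qed
        also have "\<dots> = Poly_Mapping.lookup (hB m1) m2"
          unfolding hB_def lookup_sum lookup_mconst_mult by (simp add: mult_ac)
        finally show ?thesis using hB0 by simp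
      next
        case False
        have "Poly_Mapping.lookup (f (aa g) * f (bb g)) M = 0" if g: "g \<in> G" for g
        proof (rule ccontr)
          assume "Poly_Mapping.lookup (f (aa g) * f (bb g)) M \<noteq> 0"
          hence "M \<in> Poly_Mapping.keys (f (aa g) * f (bb g))" by (simp add: in_keys_iff)
          then obtain m1 m2 where "M = m1 + m2" "m1 \<in> Poly_Mapping.keys (f (aa g))" "m2 \<in> Poly_Mapping.keys (f (bb g))"
            using keys_mult by blast
          thus False using False suppA[OF g] suppB[OF g] by blast
        qed
        thus ?thesis unfolding lh by (simp add: sum.neutral)
      qed
    qed
    thus False using h(2) by simp
  qed
qed

end


context circ2 begin

lemma subtree_cases:
  assumes p: "pos T p" and st: "subtree T p = SNode l ts"
  shows "ts = [] \<or> (\<exists>T0. ts = [T0]) \<or> (\<exists>Ta Tb. ts = [Ta, Tb])"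
proof -
  obtain t where t: "is_ptree C rt t" using ex_pt by blast
  have sh: "shape S t = T" using upt t by blast
  hence ps: "pos (shape S t) p" using p by simp
  have pt: "is_ptree C (pgate t p) (psub t p)" by (rule ptree_psub[OF t ps])
  have eq: "shape S (psub t p) = SNode l ts" using subtree_shape[OF ps] sh st by simp
  obtain g ts' where "psub t p = PT g ts'" by (cases "psub t p")
  hence "ts = map (shape S) ts'" using eq by simp
  moreover have "ts' = [] \<or> (\<exists>x. ts' = [x]) \<or> (\<exists>x y. ts' = [x, y])"
    using pt \<open>psub t p = PT g ts'\<close> by (cases rule: is_ptree.cases) auto
  ultimately show ?thesis by auto
qed

lemma claim_all: "pos T p \<Longrightarrow> Claim p"
proof (induction "r - length p" arbitrary: p rule: less_induct)
  case less
  obtain l ts where st: "subtree T p = SNode l ts" by (cases "subtree T p")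
  have lt: "r - length (p @ [k]) < r - length p" if "k < length ts" for k
  proof -
    have "pos T (p @ [k])" using child_pos[OF less.prems st that] by simp
    hence "length (p @ [k]) \<le> r" using depth unfolding depth_le_def by blast
    thus ?thesis by simp
  qed
  have IH: "Claim (p @ [k])" if "k < length ts" for k
    using less.hyps[OF lt[OF that]] child_pos[OF less.prems st that] by simp
  from subtree_cases[OF less.prems st] show ?case
  proof (elim disjE exE)
    assume "ts = []" thus ?thesis using claim_leaf[OF less.prems] st by simp
  next
    fix T0 assume "ts = [T0]" thus ?thesis using claim_add[OF less.prems] st IH[of 0] by simp
  next
    fix Ta Tb assume "ts = [Ta, Tb]" thus ?thesis using claim_mul[OF less.prems] st IH[of 0] IH[of 1] by simp
  qed
qed

lemma main: "f rt \<noteq> 0 \<longleftrightarrow> msubst (Psi w T) (f rt) \<noteq> 0"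
proof
  assume fz: "f rt \<noteq> 0"
  have pre: "Pre [] = {rt}"
  proof
    show "Pre [] \<subseteq> {rt}" unfolding preimage_def by (auto simp: pgate_psub ptree_root)
    obtain t where t: "is_ptree C rt t" using ex_pt by blast
    hence "pgate t [] = rt" by (simp add: pgate_psub ptree_root)
    thus "{rt} \<subseteq> Pre []" using t unfolding preimage_def by blast
  qed
  have "f rt \<in> spanP (Pre [])" unfolding pre by (rule span_gen) auto
  hence "msubst (psi w T) (f rt) \<noteq> 0"
    using claim_all[OF pos.here] fz unfolding Claim_def by simp
  moreover have "msubst (Psi w T) (f rt) = msubst (psi w T) (f rt)"
  proof (rule msubst_cong)
    fix m v assume "m \<in> Poly_Mapping.keys (f rt)" "v \<in> Poly_Mapping.keys m"
    hence "fst v \<in> S rt" using support[OF rt_lt] by (auto simp: Vars_def)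
    thus "Psi w T v = psi w T v" using T_good by (intro Psi_psi) auto
  qed
  ultimately show "msubst (Psi w T) (f rt) \<noteq> 0" by simp
next
  assume "msubst (Psi w T) (f rt) \<noteq> 0"
  thus "f rt \<noteq> 0" by auto
qed

end

theorem mainTheorem16:
  fixes C :: "nat \<Rightarrow> 'a::field gate"
    and N rt d n w r :: nat
    and S :: "nat \<Rightarrow> nat set"
    and T :: stree
  assumes wf: "circuit_wf C N"
    and rt_lt: "rt < N"
    and sml: "set_multilinear C N S d n rt"
    and upt: "\<forall>t. is_ptree C rt t \<longrightarrow> shape S t = T"
    and width: "preimage_width C rt T = w"
    and w_pos: "w \<ge> 1"
    and depth: "depth_le T r"
    and char: "CHAR('a) = 0 \<or> CHAR('a) > d * n * w ^ r"
  shows "circ_val C rt \<noteq> 0 \<longleftrightarrow> msubst (Psi w T) (circ_val C rt) \<noteq> 0"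
proof (cases "\<exists>t. is_ptree C rt t")
  case True
  interpret circ2 C N S d n rt w r T
    by unfold_locales (use assms True in auto)
  show ?thesis by (rule main)
next
  case False
  interpret circ C N S d n rt by unfold_locales (use assms in auto)
  have "circ_val C rt = 0" using no_ptree_zero[OF rt_lt False] .
  thus ?thesis by simp
qed


end
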